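(* Let $\mathcal{BIP}$ be the class of bipartite graphs. Then: (i) if $j\in\{4,5,6\}$, then $R_1^{\mathcal{BIP}}(4,j)=2j-3$; (ii) if $j\in\{3,7\}$, then $R_1^{\mathcal{BIP}}(4,j)=2j-2$; (iii) if $j\in\{8,9,13,14\}$, then $R_1^{\mathcal{BIP}}(4,j)=2j-1$.
   Context: All graphs are finite and simple. For a graph $G$ and a nonnegative integer $k$, a $k$-sparse $j$-set is a set of $j$ vertices of $G$ inducing a subgraph of maximum degree at most $k$; a $k$-dense $i$-set is a set of $i$ vertices of $G$ that is $k$-sparse in the complement of $G$. For a graph class $\mathcal{G}$, $R_k^{\mathcal{G}}(i,j)$ is the smallest natural number $n$ such that every graph on $n$ vertices in $\mathcal{G}$ has either a $k$-dense $i$-set or a $k$-sparse $j$-set. *)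

theory Defs
  imports Main
begin

text \<open>A finite simple graph on the vertex set {0..<n}, given by an edge relation E.
  Every finite simple graph on n vertices is isomorphic to such a graph.\<close>
definition simple_graph :: "nat \<Rightarrow> (nat \<Rightarrow> nat \<Rightarrow> bool) \<Rightarrow> bool" where
  "simple_graph n E \<longleftrightarrow> (\<forall>u v. E u v \<longrightarrow> u < n \<and> v < n \<and> u \<noteq> v \<and> E v u)"

definition bipartite :: "nat \<Rightarrow> (nat \<Rightarrow> nat \<Rightarrow> bool) \<Rightarrow> bool" where
  "bipartite n E \<longleftrightarrow> (\<exists>A. \<forall>u v. E u v \<longrightarrow> (u \<in> A \<longleftrightarrow> v \<notin> A))"

definition BIP :: "nat \<Rightarrow> (nat \<Rightarrow> nat \<Rightarrow> bool) \<Rightarrow> bool" where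
  "BIP n E \<longleftrightarrow> simple_graph n E \<and> bipartite n E"

definition k_sparse_set :: "nat \<Rightarrow> (nat \<Rightarrow> nat \<Rightarrow> bool) \<Rightarrow> nat \<Rightarrow> nat \<Rightarrow> nat set \<Rightarrow> bool" where
  "k_sparse_set n E k j S \<longleftrightarrow> S \<subseteq> {0..<n} \<and> card S = j \<and>
     (\<forall>v\<in>S. card {u\<in>S. E v u} \<le> k)"

definition compl_graph :: "nat \<Rightarrow> (nat \<Rightarrow> nat \<Rightarrow> bool) \<Rightarrow> nat \<Rightarrow> nat \<Rightarrow> bool" where
  "compl_graph n E u v \<longleftrightarrow> u < n \<and> v < n \<and> u \<noteq> v \<and> \<not> E u v"

definition k_dense_set :: "nat \<Rightarrow> (nat \<Rightarrow> nat \<Rightarrow> bool) \<Rightarrow> nat \<Rightarrow> nat \<Rightarrow> nat set \<Rightarrow> bool" where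
  "k_dense_set n E k i S \<longleftrightarrow> k_sparse_set n (compl_graph n E) k i S"

definition ramsey_num ::
  "(nat \<Rightarrow> (nat \<Rightarrow> nat \<Rightarrow> bool) \<Rightarrow> bool) \<Rightarrow> nat \<Rightarrow> nat \<Rightarrow> nat \<Rightarrow> nat" where
  "ramsey_num G k i j = (LEAST n. \<forall>E. G n E \<longrightarrow>
      (\<exists>S. k_dense_set n E k i S) \<or> (\<exists>S. k_sparse_set n E k j S))"

end

theory Submission
  imports Defs
begin


definition sides :: "nat \<Rightarrow> (nat \<Rightarrow> nat \<Rightarrow> bool) \<Rightarrow> nat set \<Rightarrow> nat set \<Rightarrow> bool" where
  "sides n E X Y \<longleftrightarrow> X \<subseteq> {0..<n} \<and> Y \<subseteq> {0..<n} \<and> X \<inter> Y = {} \<and>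
     (\<forall>u v. u \<in> X \<longrightarrow> v \<in> X \<longrightarrow> \<not> E u v) \<and> (\<forall>u v. u \<in> Y \<longrightarrow> v \<in> Y \<longrightarrow> \<not> E u v)"

lemma sides_sym: "sides n E X Y \<Longrightarrow> sides n E Y X"
  unfolding sides_def by blast

lemma sg_sym: "simple_graph n E \<Longrightarrow> E u v \<Longrightarrow> E v u"
  unfolding simple_graph_def by blast

lemma sg_range: "simple_graph n E \<Longrightarrow> E u v \<Longrightarrow> u < n \<and> v < n \<and> u \<noteq> v"
  unfolding simple_graph_def by blast

definition Uf :: "(nat \<Rightarrow> nat \<Rightarrow> bool) \<Rightarrow> nat set \<Rightarrow> nat set \<Rightarrow> nat set" where
  "Uf E X T = {x\<in>X. \<forall>y\<in>T. \<not> E x y}"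
definition Pf :: "(nat \<Rightarrow> nat \<Rightarrow> bool) \<Rightarrow> nat set \<Rightarrow> nat set \<Rightarrow> nat set" where
  "Pf E X T = {y\<in>T. \<exists>x\<in>X. E x y \<and> (\<forall>y'\<in>T. E x y' \<longrightarrow> y' = y)}"
definition Nb :: "(nat \<Rightarrow> nat \<Rightarrow> bool) \<Rightarrow> nat set \<Rightarrow> nat \<Rightarrow> nat set" where
  "Nb E X y = {x\<in>X. E x y}"

lemma card_le1_subset: "A \<subseteq> {a} \<Longrightarrow> card A \<le> 1"
  using card_mono[of "{a}" A] by simp

lemma card_ge2_obtain: "2 \<le> card A \<Longrightarrow> \<exists>a b. a \<in> A \<and> b \<in> A \<and> a \<noteq> b"
  by (metis One_nat_def card.infinite card_le_Suc0_iff_eq not_less_eq_eq numeral_2_eq_2 zero_le)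

lemma sparse_of_ge:
  assumes S: "S \<subseteq> {0..<n}" and j: "j \<le> card S" and d: "\<forall>v\<in>S. card {u\<in>S. E v u} \<le> 1"
  shows "\<exists>S'. k_sparse_set n E 1 j S'"
proof -
  have fin: "finite S" using S finite_subset by blast
  obtain S' where S': "S' \<subseteq> S" "card S' = j" using obtain_subset_with_card_n[OF j] by blast
  have "\<forall>v\<in>S'. card {u\<in>S'. E v u} \<le> 1"
  proof
    fix v assume "v \<in> S'"
    have "card {u\<in>S'. E v u} \<le> card {u\<in>S. E v u}"
      by (rule card_mono) (use fin S'(1) in auto)
    also have "\<dots> \<le> 1" using d \<open>v\<in>S'\<close> S'(1) by blast
    finally show "card {u\<in>S'. E v u} \<le> 1" .
  qed
  then show ?thesis using S S' unfolding k_sparse_set_def by blast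
qed

lemma L1:
  assumes sg: "simple_graph n E" and sd: "sides n E X Y" and T: "T \<subseteq> Y"
    and ge: "j \<le> card T + card (Uf E X T) + card (Pf E X T)"
  shows "\<exists>S. k_sparse_set n E 1 j S"
proof -
  define P where "P = Pf E X T"
  define U where "U = Uf E X T"
  define c where "c = (\<lambda>y. SOME x. x \<in> X \<and> E x y \<and> (\<forall>y'\<in>T. E x y' \<longrightarrow> y' = y))"
  have c: "c y \<in> X \<and> E (c y) y \<and> (\<forall>y'\<in>T. E (c y) y' \<longrightarrow> y' = y)" if "y \<in> P" for y
  proof -
    from that obtain x where "x \<in> X \<and> E x y \<and> (\<forall>y'\<in>T. E x y' \<longrightarrow> y' = y)"
      unfolding P_def Pf_def by blast
    then show ?thesis unfolding c_def by (rule someI)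
  qed
  have XY: "X \<subseteq> {0..<n}" "Y \<subseteq> {0..<n}" "X \<inter> Y = {}"
    and noX: "\<And>u v. u\<in>X \<Longrightarrow> v\<in>X \<Longrightarrow> \<not>E u v" and noY: "\<And>u v. u\<in>Y \<Longrightarrow> v\<in>Y \<Longrightarrow> \<not>E u v"
    using sd unfolding sides_def by auto
  have finX: "finite X" using XY(1) finite_subset by blast
  have finY: "finite Y" using XY(2) finite_subset by blast
  have finT: "finite T" using T finY finite_subset by blast
  have PT: "P \<subseteq> T" unfolding P_def Pf_def by auto
  have UX: "U \<subseteq> X" unfolding U_def Uf_def by auto
  have finU: "finite U" using UX finX finite_subset by blast
  have finP: "finite P" using PT finT finite_subset by blast
  have injc: "inj_on c P"
  proof (rule inj_onI)
    fix y y' assume "y \<in> P" "y' \<in> P" "c y = c y'"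
    then show "y = y'" using c[of y] c[of y'] PT by auto
  qed
  have cX: "c ` P \<subseteq> X" using c by auto
  define S where "S = T \<union> U \<union> c ` P"
  have d1: "T \<inter> U = {}" using T UX XY(3) by blast
  have d2: "(T \<union> U) \<inter> c ` P = {}"
  proof -
    have "T \<inter> c ` P = {}" using T cX XY(3) by blast
    moreover have "U \<inter> c ` P = {}"
    proof (rule ccontr)
      assume "U \<inter> c ` P \<noteq> {}"
      then obtain y where "y \<in> P" "c y \<in> U" by blast
      then show False using c[of y] PT unfolding U_def Uf_def by blast
    qed
    ultimately show ?thesis by blast
  qed
  have cardS: "card S = card T + card U + card P"
  proof -
    have "card S = card (T \<union> U) + card (c ` P)" unfolding S_def
      by (rule card_Un_disjoint) (use finT finU finP d2 in auto)
    also have "card (T \<union> U) = card T + card U"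
      by (rule card_Un_disjoint) (use finT finU d1 in auto)
    also have "card (c ` P) = card P" using injc by (rule card_image)
    finally show ?thesis .
  qed
  have Srange: "S \<subseteq> {0..<n}" unfolding S_def using T UX cX XY by blast
  have deg: "card {u\<in>S. E v u} \<le> 1" if v: "v \<in> S" for v
  proof -
    consider (t) "v \<in> T" | (u) "v \<in> U" | (p) y where "y \<in> P" "v = c y"
      using v unfolding S_def by blast
    then show ?thesis
    proof cases
      case t
      have "{u\<in>S. E v u} \<subseteq> {c v}"
      proof
        fix u assume u: "u \<in> {u\<in>S. E v u}"
        then have Evu: "E v u" "u \<in> S" by auto
        have "u \<notin> T" using noY t T Evu by blast
        moreover have "u \<notin> U" using Evu t sg_sym[OF sg] unfolding U_def Uf_def by blast
        ultimately obtain y where y: "y \<in> P" "u = c y" using Evu(2) unfolding S_def by blast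
        have "E (c y) v" using Evu y sg_sym[OF sg] by blast
        then have "v = y" using c[OF y(1)] t by blast
        then show "u \<in> {c v}" using y by simp
      qed
      then show ?thesis by (rule card_le1_subset)
    next
      case u
      have "{u\<in>S. E v u} = {}"
      proof -
        { fix w assume w: "w \<in> S" "E v w"
          have "w \<notin> T" using w u sg_sym[OF sg] unfolding U_def Uf_def by blast
          moreover have "w \<notin> U" using w u UX noX by blast
          moreover have "w \<notin> c ` P" using w u UX cX noX by blast
          ultimately have False using w unfolding S_def by blast }
        then show ?thesis by blast
      qed
      then show ?thesis by (metis card.empty zero_le)
    next
      case p
      have "{u\<in>S. E v u} \<subseteq> {y}"
      proof
        fix w assume w: "w \<in> {u\<in>S. E v u}"
        then have "w \<in> S" "E v w" by auto
        have "v \<in> X" using p cX by blast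
        have "w \<notin> U \<union> c ` P" using \<open>E v w\<close> \<open>v \<in> X\<close> UX cX noX by blast
        then have "w \<in> T" using \<open>w\<in>S\<close> unfolding S_def by blast
        then show "w \<in> {y}" using c[OF p(1)] p(2) \<open>E v w\<close> by blast
      qed
      then show ?thesis by (rule card_le1_subset)
    qed
  qed
  show ?thesis
    using sparse_of_ge[OF Srange, of j E] cardS ge deg unfolding U_def P_def by auto
qed

lemma L2:
  assumes sg: "simple_graph n E" and sd: "sides n E X Y" and cov: "X \<union> Y = {0..<n}"
    and S: "S \<subseteq> {0..<n}" and d: "\<forall>v\<in>S. card {u\<in>S. E v u} \<le> 1"
  shows "card S \<le> card (S \<inter> Y) + card (Uf E X (S \<inter> Y)) + card (Pf E X (S \<inter> Y))"
proof -
  define T where "T = S \<inter> Y"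
  have finS: "finite S" using S finite_subset by blast
  have XY: "X \<subseteq> {0..<n}" "Y \<subseteq> {0..<n}" using sd unfolding sides_def by auto
  have finX: "finite X" using XY(1) finite_subset by blast
  have finT: "finite T" using finS T_def by simp
  define A1 where "A1 = {x \<in> S \<inter> X. \<forall>y\<in>T. \<not> E x y}"
  define A2 where "A2 = {x \<in> S \<inter> X. \<exists>y\<in>T. E x y}"
  define g where "g = (\<lambda>x. SOME y. y \<in> T \<and> E x y)"
  have uniq: "y = y'" if "x \<in> S" "y \<in> S" "y' \<in> S" "E x y" "E x y'" for x y y'
  proof (rule ccontr)
    assume ne: "y \<noteq> y'"
    have "card {y, y'} \<le> card {u\<in>S. E x u}" by (intro card_mono) (use finS that in auto)
    then show False using d that ne by fastforce
  qed
  have g: "g x \<in> T \<and> E x (g x)" if "x \<in> A2" for x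
  proof -
    from that obtain y where "y \<in> T \<and> E x y" unfolding A2_def by blast
    then show ?thesis unfolding g_def by (rule someI)
  qed
  have gP: "g x \<in> Pf E X T" if "x \<in> A2" for x
  proof -
    have "x \<in> X" "x \<in> S" using that A2_def by auto
    moreover have "\<forall>y'\<in>T. E x y' \<longrightarrow> y' = g x" using uniq g[OF that] T_def \<open>x\<in>S\<close> by auto
    ultimately show ?thesis using g[OF that] unfolding Pf_def by auto
  qed
  have injg: "inj_on g A2"
  proof (rule inj_onI)
    fix x x' assume xx: "x \<in> A2" "x' \<in> A2" "g x = g x'"
    have "E (g x) x" "E (g x) x'" using g[OF xx(1)] g[OF xx(2)] xx(3) sg_sym[OF sg] by metis+
    moreover have "g x \<in> S" "x \<in> S" "x' \<in> S" using g[OF xx(1)] xx unfolding T_def A2_def by auto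
    ultimately show "x = x'" using uniq by blast
  qed
  have finPf: "finite (Pf E X T)" using finT unfolding Pf_def by simp
  have c2: "card A2 \<le> card (Pf E X T)"
    by (rule card_inj_on_le[OF injg]) (use gP finPf in auto)
  have c1: "card A1 \<le> card (Uf E X T)"
    by (rule card_mono) (use finX in \<open>auto simp: A1_def Uf_def\<close>)
  have Seq: "S = T \<union> A1 \<union> A2" unfolding T_def A1_def A2_def using S cov by auto
  have "card S \<le> card (T \<union> A1) + card A2" unfolding Seq by (rule card_Un_le)
  also have "\<dots> \<le> card T + card A1 + card A2" using card_Un_le[of T A1] by simp
  finally show ?thesis using c1 c2 unfolding T_def by simp
qed

lemma pair_count:
  assumes finZ: "finite Z" and finI: "finite I" and sub: "\<And>i. i \<in> I \<Longrightarrow> M i \<subseteq> Z"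
    and pw: "\<And>i i'. i \<in> I \<Longrightarrow> i' \<in> I \<Longrightarrow> i \<noteq> i' \<Longrightarrow> card (M i \<inter> M i') \<le> 1"
  shows "(\<Sum>i\<in>I. card (M i) choose 2) \<le> card Z choose 2"
proof -
  define Q where "Q = (\<lambda>i. {s. s \<subseteq> M i \<and> card s = 2})"
  have finM: "finite (M i)" if "i\<in>I" for i using sub[OF that] finZ finite_subset by blast
  have cQ: "card (Q i) = card (M i) choose 2" if "i \<in> I" for i
    unfolding Q_def using n_subsets[OF finM[OF that]] by simp
  have finQ: "finite (Q i)" if "i\<in>I" for i
  proof -
    have "Q i \<subseteq> Pow (M i)" unfolding Q_def by auto
    then show ?thesis using finM[OF that] finite_subset by blast
  qed
  have disj: "Q i \<inter> Q i' = {}" if "i\<in>I" "i'\<in>I" "i\<noteq>i'" for i i'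
  proof (rule ccontr)
    assume "Q i \<inter> Q i' \<noteq> {}"
    then obtain s where s: "s \<subseteq> M i" "s \<subseteq> M i'" "card s = 2" unfolding Q_def by blast
    then have "card s \<le> card (M i \<inter> M i')" by (intro card_mono) (use finM that in auto)
    with pw[OF that] s(3) show False by simp
  qed
  have "(\<Sum>i\<in>I. card (M i) choose 2) = (\<Sum>i\<in>I. card (Q i))" using cQ by simp
  also have "\<dots> = card (\<Union>i\<in>I. Q i)"
    by (rule card_UN_disjoint[symmetric]) (use finI finQ disj in auto)
  also have "\<dots> \<le> card {s. s \<subseteq> Z \<and> card s = 2}"
  proof (rule card_mono)
    have "{s. s \<subseteq> Z \<and> card s = 2} \<subseteq> Pow Z" by auto
    then show "finite {s. s \<subseteq> Z \<and> card s = 2}" using finZ finite_subset by blast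
    show "(\<Union>i\<in>I. Q i) \<subseteq> {s. s \<subseteq> Z \<and> card s = 2}" using sub unfolding Q_def by blast
  qed
  also have "\<dots> = card Z choose 2" using n_subsets[OF finZ] by simp
  finally show ?thesis .
qed



lemma C4_dense:
  assumes sg: "simple_graph n E" and sd: "sides n E X Y"
    and x: "x\<in>X" "x'\<in>X" "x\<noteq>x'" and y: "y\<in>Y" "y'\<in>Y" "y\<noteq>y'"
    and e: "E x y" "E x y'" "E x' y" "E x' y'"
  shows "\<exists>S. k_dense_set n E 1 4 S"
proof -
  have XY: "X \<subseteq> {0..<n}" "Y \<subseteq> {0..<n}" "X \<inter> Y = {}"
    and noX: "\<And>u v. u\<in>X \<Longrightarrow> v\<in>X \<Longrightarrow> \<not>E u v" and noY: "\<And>u v. u\<in>Y \<Longrightarrow> v\<in>Y \<Longrightarrow> \<not>E u v"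
    using sd unfolding sides_def by auto
  have e2: "E y x" "E y' x" "E y x'" "E y' x'" using e sg_sym[OF sg] by auto
  have ne: "x \<noteq> y" "x \<noteq> y'" "x' \<noteq> y" "x' \<noteq> y'" using x y XY(3) by auto
  have nx: "\<not> E x x'" "\<not> E x' x" using noX x by auto
  have ny: "\<not> E y y'" "\<not> E y' y" using noY y by auto
  let ?S = "{x,x',y,y'}"
  have card: "card ?S = 4" using ne x(3) y(3) by auto
  have range: "?S \<subseteq> {0..<n}" using x y XY by auto
  have "\<forall>v\<in>?S. card {u\<in>?S. compl_graph n E v u} \<le> 1"
  proof
    fix v assume "v \<in> ?S"
    then consider "v = x" | "v = x'" | "v = y" | "v = y'" by blast
    then show "card {u\<in>?S. compl_graph n E v u} \<le> 1"
    proof cases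
      case 1
      have "{u\<in>?S. compl_graph n E v u} \<subseteq> {x'}" using 1 e by (auto simp: compl_graph_def)
      then show ?thesis by (rule card_le1_subset)
    next
      case 2
      have "{u\<in>?S. compl_graph n E v u} \<subseteq> {x}" using 2 e by (auto simp: compl_graph_def)
      then show ?thesis by (rule card_le1_subset)
    next
      case 3
      have "{u\<in>?S. compl_graph n E v u} \<subseteq> {y'}" using 3 e2 by (auto simp: compl_graph_def)
      then show ?thesis by (rule card_le1_subset)
    next
      case 4
      have "{u\<in>?S. compl_graph n E v u} \<subseteq> {y}" using 4 e2 by (auto simp: compl_graph_def)
      then show ?thesis by (rule card_le1_subset)
    qed
  qed
  then show ?thesis using card range unfolding k_dense_set_def k_sparse_set_def by blast
qed



lemma no_triangle:
  assumes sg: "simple_graph n E" and sd: "sides n E X Y" and cov: "X \<union> Y = {0..<n}"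
  shows "\<not> (E p q \<and> E q r \<and> E p r)"
proof
  assume h: "E p q \<and> E q r \<and> E p r"
  have noX: "\<And>u v. u\<in>X \<Longrightarrow> v\<in>X \<Longrightarrow> \<not>E u v" and noY: "\<And>u v. u\<in>Y \<Longrightarrow> v\<in>Y \<Longrightarrow> \<not>E u v"
    using sd unfolding sides_def by auto
  have "p \<in> X \<union> Y" "q \<in> X \<union> Y" "r \<in> X \<union> Y" using h sg_range[OF sg] cov by auto
  then show False using h noX noY by blast
qed

lemma dense_C4:
  assumes sg: "simple_graph n E" and sd: "sides n E X Y" and cov: "X \<union> Y = {0..<n}"
    and D: "k_dense_set n E 1 4 S"
  shows "\<exists>v w a b. v \<noteq> w \<and> a \<noteq> b \<and> E v a \<and> E w a \<and> E v b \<and> E w b"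
proof -
  from D have S: "S \<subseteq> {0..<n}" "card S = 4" "\<forall>v\<in>S. card {u\<in>S. compl_graph n E v u} \<le> 1"
    unfolding k_dense_set_def k_sparse_set_def by auto
  have finS: "finite S" using S(1) finite_subset by blast
  have two: "2 \<le> card {u\<in>S. E v u}" if v: "v \<in> S" for v
  proof -
    have "S - {v} \<subseteq> {u\<in>S. compl_graph n E v u} \<union> {u\<in>S. E v u}"
      using S(1) v by (auto simp: compl_graph_def)
    then have "card (S - {v}) \<le> card ({u\<in>S. compl_graph n E v u} \<union> {u\<in>S. E v u})"
      by (intro card_mono) (use finS in auto)
    also have "\<dots> \<le> card {u\<in>S. compl_graph n E v u} + card {u\<in>S. E v u}" by (rule card_Un_le)
    finally have "card (S - {v}) \<le> 1 + card {u\<in>S. E v u}" using S(3) v by auto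
    moreover have "card (S - {v}) = 3" using S(2) v finS by simp
    ultimately show ?thesis by simp
  qed
  have tri: "\<And>p q r. \<not> (E p q \<and> E q r \<and> E p r)" using no_triangle[OF sg sd cov] by blast
  have sym: "\<And>p q. E p q \<Longrightarrow> E q p" using sg_sym[OF sg] by blast
  have irr: "\<And>p. \<not> E p p" using sg_range[OF sg] by blast
  have "S \<noteq> {}" using S(2) by (metis card.empty zero_neq_numeral)
  then obtain v where v: "v \<in> S" by blast
  obtain a b where ab: "a \<in> {u\<in>S. E v u}" "b \<in> {u\<in>S. E v u}" "a \<noteq> b"
    using card_ge2_obtain[OF two[OF v]] by blast
  have va: "v \<noteq> a" "v \<noteq> b" using ab irr by auto
  have sub: "{v,a,b} \<subseteq> S" using v ab by blast
  have c3: "card {v,a,b} = 3" using va ab(3) by simp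
  have fin3: "finite {v,a,b}" by simp
  have "card (S - {v,a,b}) = card S - card {v,a,b}" by (rule card_Diff_subset[OF fin3 sub])
  then have "card (S - {v,a,b}) = Suc 0" using S(2) c3 by simp
  then obtain w where w: "S - {v,a,b} = {w}" by (metis card_1_singleton_iff)
  have "w \<in> S - {v,a,b}" unfolding w by simp
  then have wS: "w \<in> S" "w \<noteq> v" "w \<noteq> a" "w \<noteq> b" by simp_all
  obtain c d where cd: "c \<in> {u\<in>S. E w u}" "d \<in> {u\<in>S. E w u}" "c \<noteq> d"
    using card_ge2_obtain[OF two[OF wS(1)]] by blast
  have cdE: "c \<in> S" "E w c" "d \<in> S" "E w d" using cd by simp_all
  have "c \<noteq> w" "d \<noteq> w" using cdE irr by metis+
  then have "c \<in> S - {w}" "d \<in> S - {w}" using cdE by simp_all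
  then have cin: "c \<in> {v,a,b}" and din: "d \<in> {v,a,b}" unfolding w[symmetric] by blast+
  have Eva: "E v a" "E v b" using ab by simp_all
  have nwv: "\<not> E w v"
  proof
    assume wv: "E w v"
    have "\<not> E w a" using tri[of w v a] wv Eva(1) by blast
    moreover have "\<not> E w b" using tri[of w v b] wv Eva(2) by blast
    ultimately have "c = v" "d = v" using cdE cin din by auto
    then show False using cd(3) by simp
  qed
  have "c \<noteq> v" "d \<noteq> v" using nwv cdE by metis+
  then have "c \<in> {a,b}" "d \<in> {a,b}" using cin din by simp_all
  then have wab: "E w a \<and> E w b" using cdE cd(3) by auto
  have "v \<noteq> w" "a \<noteq> b" "E v a" "E w a" "E v b" "E w b" using wS ab(3) Eva wab by auto
  then show ?thesis by blast
qed



definition restr :: "nat \<Rightarrow> (nat \<Rightarrow> nat \<Rightarrow> bool) \<Rightarrow> nat \<Rightarrow> nat \<Rightarrow> bool" where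
  "restr m E u v \<longleftrightarrow> E u v \<and> u < m \<and> v < m"

definition good :: "nat \<Rightarrow> (nat \<Rightarrow> nat \<Rightarrow> bool) \<Rightarrow> nat \<Rightarrow> bool" where
  "good n E j \<longleftrightarrow> (\<exists>S. k_dense_set n E 1 4 S) \<or> (\<exists>S. k_sparse_set n E 1 j S)"

lemma restr_BIP: "BIP N E \<Longrightarrow> BIP m (restr m E)"
  unfolding BIP_def simple_graph_def bipartite_def restr_def by blast

lemma restr_good:
  assumes mN: "m \<le> N" and g: "good m (restr m E) j"
  shows "good N E j"
proof -
  { assume "\<exists>S. k_sparse_set m (restr m E) 1 j S"
    then obtain S where S: "k_sparse_set m (restr m E) 1 j S" by blast
    then have Sm: "S \<subseteq> {0..<m}" unfolding k_sparse_set_def by auto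
    have "\<And>v. v \<in> S \<Longrightarrow> {u\<in>S. restr m E v u} = {u\<in>S. E v u}" using Sm by (auto simp: restr_def)
    then have "k_sparse_set N E 1 j S" using S Sm mN unfolding k_sparse_set_def by auto
    then have ?thesis unfolding good_def by blast }
  moreover
  { assume "\<exists>S. k_dense_set m (restr m E) 1 4 S"
    then obtain S where S: "k_dense_set m (restr m E) 1 4 S" by blast
    then have Sm: "S \<subseteq> {0..<m}" unfolding k_dense_set_def k_sparse_set_def by auto
    have "\<And>v. v \<in> S \<Longrightarrow> {u\<in>S. compl_graph m (restr m E) v u} = {u\<in>S. compl_graph N E v u}"
      using Sm mN by (auto simp: restr_def compl_graph_def)
    then have "k_dense_set N E 1 4 S" using S Sm mN unfolding k_dense_set_def k_sparse_set_def by auto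
    then have ?thesis unfolding good_def by blast }
  ultimately show ?thesis using g unfolding good_def by blast
qed

lemma ramsey_eq:
  assumes up: "\<forall>E. BIP R E \<longrightarrow> good R E j" and low: "BIP (R - 1) E0" "\<not> good (R - 1) E0 j"
    and R: "1 \<le> R"
  shows "ramsey_num BIP 1 4 j = R"
  unfolding ramsey_num_def
proof (rule Least_equality)
  show "\<forall>E. BIP R E \<longrightarrow> (\<exists>S. k_dense_set R E 1 4 S) \<or> (\<exists>S. k_sparse_set R E 1 j S)"
    using up unfolding good_def .
next
  fix m assume h: "\<forall>E. BIP m E \<longrightarrow> (\<exists>S. k_dense_set m E 1 4 S) \<or> (\<exists>S. k_sparse_set m E 1 j S)"
  show "R \<le> m"
  proof (rule ccontr)
    assume "\<not> R \<le> m"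
    then have m: "m \<le> R - 1" by simp
    have "BIP m (restr m E0)" using restr_BIP low(1) by blast
    then have "good m (restr m E0) j" using h unfolding good_def by blast
    then have "good (R - 1) E0 j" using restr_good[OF m] by blast
    then show False using low(2) by blast
  qed
qed

lemma indep_sparse:
  assumes sd: "sides n E X Y" and j: "j \<le> card X"
  shows "\<exists>S. k_sparse_set n E 1 j S"
proof -
  have XY: "X \<subseteq> {0..<n}" and noX: "\<And>u v. u\<in>X \<Longrightarrow> v\<in>X \<Longrightarrow> \<not>E u v"
    using sd unfolding sides_def by auto
  have "\<forall>v\<in>X. card {u\<in>X. E v u} \<le> 1"
  proof
    fix v assume "v \<in> X"
    then have "{u\<in>X. E v u} = {}" using noX by blast
    then show "card {u\<in>X. E v u} \<le> 1" by (metis card.empty zero_le)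
  qed
  then show ?thesis using sparse_of_ge[OF XY j] by blast
qed



lemma sides_fin: "sides n E X Y \<Longrightarrow> finite X \<and> finite Y"
proof -
  assume "sides n E X Y"
  then have "X \<subseteq> {0..<n}" "Y \<subseteq> {0..<n}" unfolding sides_def by auto
  then show ?thesis by (meson finite_atLeastLessThan finite_subset)
qed

lemma Nb_sub: "Nb E X y \<subseteq> X" unfolding Nb_def by auto

lemma Nb_fin: "finite X \<Longrightarrow> finite (Nb E X y)" unfolding Nb_def by simp

lemma Pf_intro: "y \<in> T \<Longrightarrow> x \<in> X \<Longrightarrow> E x y \<Longrightarrow> (\<And>y'. y' \<in> T \<Longrightarrow> E x y' \<Longrightarrow> y' = y) \<Longrightarrow> y \<in> Pf E X T"
  unfolding Pf_def by blast

lemma Pf_sub: "Pf E X T \<subseteq> T" unfolding Pf_def by blast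

lemma single_rule:
  assumes sd: "sides n E X Y" and y: "y \<in> Y" and d: "card (Nb E X y) \<le> 1"
    and cX: "card X = j - 1" and j: "1 \<le> j"
  shows "j \<le> card {y} + card (Uf E X {y}) + card (Pf E X {y})"
proof -
  have finX: "finite X" using sides_fin[OF sd] by blast
  have U: "Uf E X {y} = X - Nb E X y" unfolding Uf_def Nb_def by auto
  have cU: "card (Uf E X {y}) = card X - card (Nb E X y)"
    unfolding U by (rule card_Diff_subset[OF Nb_fin[OF finX] Nb_sub])
  show ?thesis
  proof (cases "Nb E X y = {}")
    case True
    then show ?thesis using cU cX j by simp
  next
    case False
    then obtain x where x: "x \<in> Nb E X y" by blast
    have "Pf E X {y} = {y}" using x unfolding Pf_def Nb_def by auto
    moreover have "1 \<le> card (Nb E X y)" using False Nb_fin[OF finX]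
      by (metis One_nat_def Suc_leI card_gt_0_iff)
    moreover have "card (Nb E X y) \<le> card X" using card_mono[OF finX Nb_sub] .
    ultimately show ?thesis using cU cX j d by simp
  qed
qed

lemma pair_rule:
  assumes sd: "sides n E X Y" and y: "y1 \<in> Y" "y2 \<in> Y" "y1 \<noteq> y2"
    and d1: "card (Nb E X y1) = 2" and d2: "card (Nb E X y2) = 2"
    and i: "card (Nb E X y1 \<inter> Nb E X y2) = 1" and cX: "card X = j - 1"
  shows "j \<le> card {y1,y2} + card (Uf E X {y1,y2}) + card (Pf E X {y1,y2})"
proof -
  define N1 where "N1 = Nb E X y1"
  define N2 where "N2 = Nb E X y2"
  have finX: "finite X" using sides_fin[OF sd] by blast
  have fin: "finite N1" "finite N2" unfolding N1_def N2_def using Nb_fin[OF finX] by blast+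
  have U: "Uf E X {y1,y2} = X - (N1 \<union> N2)" unfolding Uf_def N1_def N2_def Nb_def by auto
  have sub: "N1 \<union> N2 \<subseteq> X" unfolding N1_def N2_def using Nb_sub by blast
  have cu: "card (N1 \<union> N2) = 3"
    using card_Un_Int[OF fin] d1 d2 i unfolding N1_def N2_def by simp
  have cU: "card (Uf E X {y1,y2}) = card X - 3"
    unfolding U using card_Diff_subset[OF _ sub] cu fin by simp
  have "card (N1 \<union> N2) \<le> card X" using card_mono[OF finX sub] .
  then have j4: "4 \<le> j" using cu cX by simp
  have "\<not> N1 \<subseteq> N2"
  proof
    assume "N1 \<subseteq> N2"
    then have "N1 \<inter> N2 = N1" by blast
    then show False using d1 i unfolding N1_def N2_def by simp
  qed
  then obtain x1 where x1: "x1 \<in> N1" "x1 \<notin> N2" by blast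
  have "\<not> N2 \<subseteq> N1"
  proof
    assume "N2 \<subseteq> N1"
    then have "N1 \<inter> N2 = N2" by blast
    then show False using d2 i unfolding N1_def N2_def by simp
  qed
  then obtain x2 where x2: "x2 \<in> N2" "x2 \<notin> N1" by blast
  have x1': "x1 \<in> X" "E x1 y1" "\<not> E x1 y2" using x1 unfolding N1_def N2_def Nb_def by blast+
  have x2': "x2 \<in> X" "E x2 y2" "\<not> E x2 y1" using x2 unfolding N1_def N2_def Nb_def by blast+
  have "y1 \<in> Pf E X {y1,y2}"
    by (rule Pf_intro[where x=x1]) (use x1' in auto)
  moreover have "y2 \<in> Pf E X {y1,y2}"
    by (rule Pf_intro[where x=x2]) (use x2' in auto)
  ultimately have "{y1,y2} \<subseteq> Pf E X {y1,y2}" by blast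
  moreover have "finite (Pf E X {y1,y2})" by (rule rev_finite_subset[OF _ Pf_sub]) simp
  ultimately have "card {y1,y2} \<le> card (Pf E X {y1,y2})" using card_mono by blast
  then have "2 \<le> card (Pf E X {y1,y2})" using y(3) by simp
  then show ?thesis using cU cX j4 y(3) by simp
qed

lemma triple_rule:
  assumes sd: "sides n E X Y" and y: "y1 \<in> Y" "y2 \<in> Y" "y3 \<in> Y" "y1 \<noteq> y2" "y1 \<noteq> y3" "y2 \<noteq> y3"
    and d1: "card (Nb E X y1) = 2" and d2: "card (Nb E X y2) = 2"
    and disj: "Nb E X y1 \<inter> Nb E X y2 = {}"
    and i1: "card (Nb E X y1 \<inter> Nb E X y3) \<le> 1" and i2: "card (Nb E X y2 \<inter> Nb E X y3) \<le> 1"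
    and k: "card (Nb E X y3 - (Nb E X y1 \<union> Nb E X y2)) \<le> 1" and cX: "card X = j - 1"
  shows "j \<le> card {y1,y2,y3} + card (Uf E X {y1,y2,y3}) + card (Pf E X {y1,y2,y3})"
proof -
  define N1 where "N1 = Nb E X y1"
  define N2 where "N2 = Nb E X y2"
  define N3 where "N3 = Nb E X y3"
  define K where "K = N3 - (N1 \<union> N2)"
  have finX: "finite X" using sides_fin[OF sd] by blast
  have fin: "finite N1" "finite N2" "finite N3" unfolding N1_def N2_def N3_def
    using Nb_fin[OF finX] by blast+
  have U: "Uf E X {y1,y2,y3} = X - ((N1 \<union> N2) \<union> K)"
    unfolding Uf_def N1_def N2_def N3_def K_def Nb_def by auto
  have sub: "(N1 \<union> N2) \<union> K \<subseteq> X" unfolding N1_def N2_def N3_def K_def using Nb_sub by blast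
  have c12: "card (N1 \<union> N2) = 4"
    using card_Un_disjoint[OF fin(1,2)] disj d1 d2 unfolding N1_def N2_def by simp
  have cK: "card ((N1 \<union> N2) \<union> K) = 4 + card K"
    using card_Un_disjoint[of "N1 \<union> N2" K] fin c12 unfolding K_def by auto
  have cU: "card (Uf E X {y1,y2,y3}) = card X - (4 + card K)"
    unfolding U using card_Diff_subset[OF _ sub] cK fin unfolding K_def by simp
  have le: "4 + card K \<le> card X" using card_mono[OF finX sub] cK by simp
  have ex1: "\<exists>x. x \<in> N1 \<and> x \<notin> N3"
  proof (rule ccontr)
    assume "\<not> ?thesis"
    then have "N1 \<subseteq> N1 \<inter> N3" by blast
    then have "card N1 \<le> card (N1 \<inter> N3)" using fin by (intro card_mono) auto
    then show False using i1 d1 unfolding N1_def N3_def by simp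
  qed
  have ex2: "\<exists>x. x \<in> N2 \<and> x \<notin> N3"
  proof (rule ccontr)
    assume "\<not> ?thesis"
    then have "N2 \<subseteq> N2 \<inter> N3" by blast
    then have "card N2 \<le> card (N2 \<inter> N3)" using fin by (intro card_mono) auto
    then show False using i2 d2 unfolding N2_def N3_def by simp
  qed
  have p1: "y1 \<in> Pf E X {y1,y2,y3}"
  proof -
    obtain x where x: "x \<in> N1" "x \<notin> N3" using ex1 by blast
    have "x \<notin> N2" using x disj unfolding N1_def N2_def by blast
    then have x': "x \<in> X" "E x y1" "\<not> E x y2" "\<not> E x y3" using x unfolding N1_def N2_def N3_def Nb_def by blast+
    show ?thesis by (rule Pf_intro[where x=x]) (use x' in auto)
  qed
  have p2: "y2 \<in> Pf E X {y1,y2,y3}"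
  proof -
    obtain x where x: "x \<in> N2" "x \<notin> N3" using ex2 by blast
    have "x \<notin> N1" using x disj unfolding N1_def N2_def by blast
    then have x': "x \<in> X" "E x y2" "\<not> E x y1" "\<not> E x y3" using x unfolding N1_def N2_def N3_def Nb_def by blast+
    show ?thesis by (rule Pf_intro[where x=x]) (use x' in auto)
  qed
  have finP: "finite (Pf E X {y1,y2,y3})" by (rule rev_finite_subset[OF _ Pf_sub]) simp
  have c3: "card {y1,y2,y3} = 3" using y by simp
  show ?thesis
  proof (cases "K = {}")
    case True
    have "{y1,y2} \<subseteq> Pf E X {y1,y2,y3}" using p1 p2 by blast
    then have "card {y1,y2} \<le> card (Pf E X {y1,y2,y3})" by (rule card_mono[OF finP])
    then have "2 \<le> card (Pf E X {y1,y2,y3})" using y(4) by simp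
    then show ?thesis using cU cX c3 le True by simp
  next
    case False
    then obtain x where x: "x \<in> K" by blast
    have x': "x \<in> X" "E x y3" "\<not> E x y1" "\<not> E x y2" using x unfolding K_def N1_def N2_def N3_def Nb_def by blast+
    have "y3 \<in> Pf E X {y1,y2,y3}" by (rule Pf_intro[where x=x]) (use x' in auto)
    then have "{y1,y2,y3} \<subseteq> Pf E X {y1,y2,y3}" using p1 p2 by blast
    then have "card {y1,y2,y3} \<le> card (Pf E X {y1,y2,y3})" by (rule card_mono[OF finP])
    then have "3 \<le> card (Pf E X {y1,y2,y3})" using c3 by simp
    moreover have "card K = 1"
    proof -
      have "card K \<noteq> 0" using False fin unfolding K_def by simp
      moreover have "card K \<le> 1" using k unfolding K_def N1_def N2_def N3_def .
      ultimately show "card K = 1" by simp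
    qed
    ultimately show ?thesis using cU cX c3 le by simp
  qed
qed



definition fv :: "(nat \<Rightarrow> nat \<Rightarrow> bool) \<Rightarrow> nat set \<Rightarrow> nat set \<Rightarrow> nat" where
  "fv E X T = card T + card (Uf E X T) + card (Pf E X T)"

definition c4free :: "(nat \<Rightarrow> nat \<Rightarrow> bool) \<Rightarrow> nat set \<Rightarrow> nat set \<Rightarrow> bool" where
  "c4free E X Y \<longleftrightarrow> (\<forall>y\<in>Y. \<forall>y'\<in>Y. y \<noteq> y' \<longrightarrow> card (Nb E X y \<inter> Nb E X y') \<le> 1)"

lemma c4free_of_nodense:
  assumes sg: "simple_graph n E" and sd: "sides n E X Y" and nd: "\<not> (\<exists>S. k_dense_set n E 1 4 S)"
  shows "c4free E X Y"
  unfolding c4free_def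
proof (intro ballI impI)
  fix y y' assume y: "y \<in> Y" "y' \<in> Y" "y \<noteq> y'"
  show "card (Nb E X y \<inter> Nb E X y') \<le> 1"
  proof (rule ccontr)
    assume "\<not> ?thesis"
    then have "2 \<le> card (Nb E X y \<inter> Nb E X y')" by simp
    then obtain x x' where xx: "x \<in> Nb E X y \<inter> Nb E X y'" "x' \<in> Nb E X y \<inter> Nb E X y'" "x \<noteq> x'"
      using card_ge2_obtain by blast
    then have e: "x\<in>X" "x'\<in>X" "E x y" "E x y'" "E x' y" "E x' y'" unfolding Nb_def by auto
    have "\<exists>S. k_dense_set n E 1 4 S" by (rule C4_dense[OF sg sd e(1,2) xx(3) y e(3-6)])
    with nd show False by blast
  qed
qed

lemma card_filter_sum:
  assumes "finite A" shows "card {x\<in>A. P x} = (\<Sum>x\<in>A. if P x then 1 else 0)"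
proof -
  have "card {x\<in>A. P x} = (\<Sum>x\<in>{x\<in>A. P x}. 1)" by (rule card_eq_sum)
  also have "\<dots> = (\<Sum>x\<in>A. if P x then 1 else 0)" by (rule sum.inter_filter[OF assms])
  finally show ?thesis .
qed

lemma double_count:
  assumes fX: "finite X" and fY: "finite Y" and sym: "\<And>x y. E x y \<Longrightarrow> E y x"
  shows "(\<Sum>y\<in>Y. card (Nb E X y)) = (\<Sum>x\<in>X. card (Nb E Y x))"
proof -
  have "(\<Sum>y\<in>Y. card (Nb E X y)) = (\<Sum>y\<in>Y. \<Sum>x\<in>X. if E x y then 1 else 0)"
    unfolding Nb_def using fX by (simp add: card_filter_sum)
  also have "\<dots> = (\<Sum>x\<in>X. \<Sum>y\<in>Y. if E x y then 1 else 0)" by (rule sum.swap)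
  also have "\<dots> = (\<Sum>x\<in>X. \<Sum>y\<in>Y. if E y x then 1 else 0)"
  proof (intro sum.cong refl)
    fix x y
    have "E x y = E y x" using sym by blast
    then show "(if E x y then 1 else 0) = (if E y x then 1 else (0::nat))" by simp
  qed
  also have "\<dots> = (\<Sum>x\<in>X. card (Nb E Y x))"
    unfolding Nb_def using fY by (simp add: card_filter_sum)
  finally show ?thesis .
qed

lemma two_d_le: "2 * d \<le> (d choose 2) + 3"
proof -
  have m: "4 * d \<le> d * (d - 1) + 6"
  proof (cases "d \<le> 3")
    case True
    then have "d = 0 \<or> d = 1 \<or> d = 2 \<or> d = 3" by auto
    then show ?thesis by auto
  next
    case False
    then have h: "4 * (d - 1) \<le> d * (d - 1)" by (intro mult_right_mono) auto
    have "4 * (d - 1) = 4 * d - 4" by simp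
    then show ?thesis using h False by arith
  qed
  have "\<And>m. 4 * d \<le> m + 6 \<Longrightarrow> 2 * d \<le> m div 2 + 3" by presburger
  from this[OF m] show ?thesis by (simp add: choose_two)
qed

lemma choose2_2: "(2::nat) choose 2 = 1" by (simp add: choose_two)

lemma fail_rules:
  assumes sd: "sides n E X Y" and c4: "c4free E X Y" and cX: "card X = j - 1" and j: "1 \<le> j"
    and fail: "\<not> (\<exists>T\<subseteq>Y. j \<le> fv E X T)"
  shows "\<And>y. y \<in> Y \<Longrightarrow> 2 \<le> card (Nb E X y)"
    and "\<And>y1 y2. y1 \<in> Y \<Longrightarrow> y2 \<in> Y \<Longrightarrow> y1 \<noteq> y2 \<Longrightarrow> card (Nb E X y1) = 2 \<Longrightarrow>
           card (Nb E X y2) = 2 \<Longrightarrow> Nb E X y1 \<inter> Nb E X y2 = {}"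
proof -
  fix y assume y: "y \<in> Y"
  show "2 \<le> card (Nb E X y)"
  proof (rule ccontr)
    assume "\<not> ?thesis"
    then have "card (Nb E X y) \<le> 1" by simp
    from single_rule[OF sd y this cX j] have "j \<le> fv E X {y}" unfolding fv_def .
    then show False using fail y by blast
  qed
next
  fix y1 y2 assume y: "y1 \<in> Y" "y2 \<in> Y" "y1 \<noteq> y2" and d: "card (Nb E X y1) = 2" "card (Nb E X y2) = 2"
  show "Nb E X y1 \<inter> Nb E X y2 = {}"
  proof (rule ccontr)
    assume ne: "Nb E X y1 \<inter> Nb E X y2 \<noteq> {}"
    have finX: "finite X" using sides_fin[OF sd] by blast
    have "finite (Nb E X y1 \<inter> Nb E X y2)" using Nb_fin[OF finX] by blast
    then have "1 \<le> card (Nb E X y1 \<inter> Nb E X y2)" using ne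
      by (metis One_nat_def Suc_leI card_gt_0_iff)
    moreover have "card (Nb E X y1 \<inter> Nb E X y2) \<le> 1" using c4 y unfolding c4free_def by blast
    ultimately have "card (Nb E X y1 \<inter> Nb E X y2) = 1" by simp
    from pair_rule[OF sd y d this cX] have "j \<le> fv E X {y1,y2}" unfolding fv_def .
    moreover have "{y1,y2} \<subseteq> Y" using y by blast
    ultimately show False using fail by blast
  qed
qed



lemma Nb_eq_X:
  assumes finX: "finite X" and d: "card X \<le> card (Nb E X y)"
  shows "Nb E X y = X"
proof (rule card_subset_eq[OF finX Nb_sub])
  show "card (Nb E X y) = card X" using d card_mono[OF finX Nb_sub[of E X y]] by simp
qed

lemma core3:
  assumes sd: "sides n E X Y" and c4: "c4free E X Y" and cX: "card X = 2" and cY: "card Y = 2"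
  shows "\<exists>T\<subseteq>Y. 3 \<le> fv E X T"
proof (rule ccontr)
  assume fail: "\<not> ?thesis"
  have cX': "card X = 3 - 1" using cX by simp
  have j1: "1 \<le> (3::nat)" by simp
  note fr = fail_rules[OF sd c4 cX' j1 fail]
  obtain y1 y2 where y: "y1 \<in> Y" "y2 \<in> Y" "y1 \<noteq> y2" using card_ge2_obtain[of Y] cY by auto
  have finX: "finite X" using sides_fin[OF sd] by blast
  have "Nb E X y1 = X" by (rule Nb_eq_X[OF finX]) (use fr(1)[OF y(1)] cX in simp)
  moreover have "Nb E X y2 = X" by (rule Nb_eq_X[OF finX]) (use fr(1)[OF y(2)] cX in simp)
  ultimately have "card (Nb E X y1 \<inter> Nb E X y2) = 2" using cX by simp
  moreover have "card (Nb E X y1 \<inter> Nb E X y2) \<le> 1" using c4 y unfolding c4free_def by blast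
  ultimately show False by simp
qed

lemma core4:
  assumes sd: "sides n E X Y" and c4: "c4free E X Y" and cX: "card X = 3" and cY: "card Y = 2"
  shows "\<exists>T\<subseteq>Y. 4 \<le> fv E X T"
proof (rule ccontr)
  assume fail: "\<not> ?thesis"
  have cX': "card X = 4 - 1" using cX by simp
  have j1: "1 \<le> (4::nat)" by simp
  note fr = fail_rules[OF sd c4 cX' j1 fail]
  obtain y1 y2 where y: "y1 \<in> Y" "y2 \<in> Y" "y1 \<noteq> y2" using card_ge2_obtain[of Y] cY by auto
  have finX: "finite X" using sides_fin[OF sd] by blast
  define N1 where "N1 = Nb E X y1"
  define N2 where "N2 = Nb E X y2"
  have fin: "finite N1" "finite N2" unfolding N1_def N2_def using Nb_fin[OF finX] by blast+
  have "N1 \<union> N2 \<subseteq> X" unfolding N1_def N2_def using Nb_sub by blast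
  then have u: "card (N1 \<union> N2) \<le> 3" using card_mono[OF finX] cX by metis
  have i: "card (N1 \<inter> N2) \<le> 1" using c4 y unfolding c4free_def N1_def N2_def by blast
  have d: "2 \<le> card N1" "2 \<le> card N2" using fr(1) y unfolding N1_def N2_def by auto
  have "card N1 + card N2 = card (N1 \<union> N2) + card (N1 \<inter> N2)" by (rule card_Un_Int[OF fin])
  then have "card N1 = 2" "card N2 = 2" "card (N1 \<inter> N2) = 1" using u i d by linarith+
  then have "N1 \<inter> N2 \<noteq> {}" by auto
  moreover have "N1 \<inter> N2 = {}" using fr(2)[OF y] \<open>card N1 = 2\<close> \<open>card N2 = 2\<close>
    unfolding N1_def N2_def by blast
  ultimately show False by blast
qed

lemma third_row:
  assumes sd: "sides n E X Y" and c4: "c4free E X Y"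
    and y: "y1 \<in> Y" "y2 \<in> Y" "y1 \<noteq> y2"
    and u: "card (Nb E X y1 \<union> Nb E X y2) = 4"
    and cases: "(card X = 4 \<and> card Y = 3) \<or> (card X = 5 \<and> card Y = 4) \<or> (card X = 6 \<and> card Y = 6)"
  shows "\<exists>y3\<in>Y. y3 \<noteq> y1 \<and> y3 \<noteq> y2 \<and> card (Nb E X y3 - (Nb E X y1 \<union> Nb E X y2)) \<le> 1"
proof -
  define U where "U = Nb E X y1 \<union> Nb E X y2"
  have finX: "finite X" and finY: "finite Y" using sides_fin[OF sd] by blast+
  have UX: "U \<subseteq> X" unfolding U_def using Nb_sub by blast
  have cW: "card (X - U) = card X - 4" using card_Diff_subset[OF rev_finite_subset[OF finX UX] UX] u
    unfolding U_def by simp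
  have sub: "\<And>y. Nb E X y - U \<subseteq> X - U" using Nb_sub by blast
  have finW: "finite (X - U)" using finX by simp
  have cY': "card (Y - {y1,y2}) = card Y - 2"
    using card_Diff_subset[of "{y1,y2}" Y] y by simp
  show ?thesis
  proof (cases "card X = 6 \<and> card Y = 6")
    case False
    then have c: "card X \<le> 5" "3 \<le> card Y" using cases by auto
    then have "card (Y - {y1,y2}) \<noteq> 0" using cY' by simp
    then have "Y - {y1,y2} \<noteq> {}" by (metis card.empty)
    then obtain y3 where y3: "y3 \<in> Y" "y3 \<noteq> y1" "y3 \<noteq> y2" by blast
    have "card (Nb E X y3 - U) \<le> card (X - U)" by (rule card_mono[OF finW sub])
    then have "card (Nb E X y3 - U) \<le> 1" using cW c by simp
    then show ?thesis using y3 unfolding U_def by blast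
  next
    case True
    then have "card (Y - {y1,y2}) = 4" using cY' by simp
    then have "2 \<le> card (Y - {y1,y2})" by simp
    then obtain y3 y4 where yy: "y3 \<in> Y - {y1,y2}" "y4 \<in> Y - {y1,y2}" "y3 \<noteq> y4"
      using card_ge2_obtain by blast
    have cW2: "card (X - U) = 2" using cW True by simp
    show ?thesis
    proof (rule ccontr)
      assume nn: "\<not> ?thesis"
      have big: "2 \<le> card (Nb E X y - U)" if "y \<in> Y - {y1,y2}" for y
        using nn that unfolding U_def by force
      have e3: "Nb E X y3 - U = X - U"
        by (rule card_subset_eq[OF finW sub]) (use big[OF yy(1)] card_mono[OF finW sub[of y3]] cW2 in linarith)
      have e4: "Nb E X y4 - U = X - U"
        by (rule card_subset_eq[OF finW sub]) (use big[OF yy(2)] card_mono[OF finW sub[of y4]] cW2 in linarith)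
      have "X - U \<subseteq> Nb E X y3 \<inter> Nb E X y4" using e3 e4 by blast
      then have "card (X - U) \<le> card (Nb E X y3 \<inter> Nb E X y4)"
        by (rule card_mono[rotated]) (use Nb_fin[OF finX] in blast)
      moreover have "card (Nb E X y3 \<inter> Nb E X y4) \<le> 1" using c4 yy unfolding c4free_def by blast
      ultimately show False using cW2 by simp
    qed
  qed
qed



lemma sum_lower:
  fixes g :: "nat \<Rightarrow> nat"
  assumes finY: "finite Y" and D: "D \<subseteq> Y" and a: "\<And>y. y \<in> Y - D \<Longrightarrow> a \<le> g y"
    and b: "\<And>y. y \<in> D \<Longrightarrow> b \<le> g y"
  shows "a * card (Y - D) + b * card D \<le> (\<Sum>y\<in>Y. g y)"
proof -
  have s: "(\<Sum>y\<in>Y. g y) = (\<Sum>y\<in>Y - D. g y) + (\<Sum>y\<in>D. g y)" by (rule sum.subset_diff[OF D finY])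
  have "of_nat (card (Y - D)) * a \<le> (\<Sum>y\<in>Y - D. g y)" by (rule sum_bounded_below) (rule a)
  then have s1: "a * card (Y - D) \<le> (\<Sum>y\<in>Y - D. g y)" by (simp add: mult.commute)
  have "of_nat (card D) * b \<le> (\<Sum>y\<in>D. g y)" by (rule sum_bounded_below) (rule b)
  then have s2: "b * card D \<le> (\<Sum>y\<in>D. g y)" by (simp add: mult.commute)
  show ?thesis using s s1 s2 by linarith
qed

lemma ch: "(4::nat) choose 2 = 6" "(5::nat) choose 2 = 10" "(6::nat) choose 2 = 15" "(3::nat) choose 2 = 3"
  by (simp_all add: choose_two)

lemma core567:
  assumes sg: "simple_graph n E" and sd: "sides n E X Y" and c4: "c4free E X Y" and c4': "c4free E Y X"
    and cases: "(j = 5 \<and> card X = 4 \<and> card Y = 3) \<or> (j = 6 \<and> card X = 5 \<and> card Y = 4) \<or> (j = 7 \<and> card X = 6 \<and> card Y = 6)"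
  shows "\<exists>T\<subseteq>Y. j \<le> fv E X T"
proof (rule ccontr)
  assume fail: "\<not> ?thesis"
  have cX: "card X = j - 1" and j1: "1 \<le> j" using cases by auto
  note fr = fail_rules[OF sd c4 cX j1 fail]
  have finX: "finite X" and finY: "finite Y" using sides_fin[OF sd] by blast+
  define D where "D = {y\<in>Y. card (Nb E X y) = 2}"
  have DY: "D \<subseteq> Y" unfolding D_def by auto
  have sumb: "(\<Sum>y\<in>Y. card (Nb E X y) choose 2) \<le> card X choose 2"
    by (rule pair_count[OF finX finY Nb_sub]) (use c4 in \<open>auto simp: c4free_def\<close>)
  show False
  proof (cases "2 \<le> card D")
    case True
    then obtain y1 y2 where yy: "y1 \<in> D" "y2 \<in> D" "y1 \<noteq> y2" using card_ge2_obtain by blast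
    then have y: "y1 \<in> Y" "y2 \<in> Y" and d: "card (Nb E X y1) = 2" "card (Nb E X y2) = 2"
      unfolding D_def by auto
    have disj: "Nb E X y1 \<inter> Nb E X y2 = {}" by (rule fr(2)[OF y yy(3) d])
    have u: "card (Nb E X y1 \<union> Nb E X y2) = 4"
      using card_Un_disjoint[OF Nb_fin[OF finX] Nb_fin[OF finX] disj] d by simp
    have cs: "(card X = 4 \<and> card Y = 3) \<or> (card X = 5 \<and> card Y = 4) \<or> (card X = 6 \<and> card Y = 6)"
      using cases by auto
    obtain y3 where y3: "y3 \<in> Y" "y3 \<noteq> y1" "y3 \<noteq> y2"
      "card (Nb E X y3 - (Nb E X y1 \<union> Nb E X y2)) \<le> 1"
      using third_row[OF sd c4 y yy(3) u cs] by blast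
    have i1: "card (Nb E X y1 \<inter> Nb E X y3) \<le> 1" using c4 y(1) y3(1,2) unfolding c4free_def by metis
    have i2: "card (Nb E X y2 \<inter> Nb E X y3) \<le> 1" using c4 y(2) y3(1,3) unfolding c4free_def by metis
    have n13: "y1 \<noteq> y3" and n23: "y2 \<noteq> y3" using y3 by auto
    have "j \<le> card {y1,y2,y3} + card (Uf E X {y1,y2,y3}) + card (Pf E X {y1,y2,y3})"
      by (rule triple_rule[OF sd y(1) y(2) y3(1) yy(3) n13 n23 d disj i1 i2 y3(4) cX])
    moreover have "{y1,y2,y3} \<subseteq> Y" using y y3 by blast
    ultimately show False using fail unfolding fv_def by blast
  next
    case False
    then have cD: "card D \<le> 1" by simp
    have low: "3 * card (Y - D) + 1 * card D \<le> (\<Sum>y\<in>Y. card (Nb E X y) choose 2)"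
    proof (rule sum_lower[OF finY DY])
      fix y assume yD: "y \<in> Y - D"
      then have "2 \<le> card (Nb E X y)" "card (Nb E X y) \<noteq> 2" using fr(1) unfolding D_def by auto
      then have "3 \<le> card (Nb E X y)" by simp
      then show "3 \<le> card (Nb E X y) choose 2" using two_d_le[of "card (Nb E X y)"] by linarith
    next
      fix y assume "y \<in> D"
      then have "card (Nb E X y) = 2" unfolding D_def by auto
      then show "1 \<le> card (Nb E X y) choose 2" by (simp add: choose_two)
    qed
    have cYD: "card (Y - D) = card Y - card D"
      by (rule card_Diff_subset[OF rev_finite_subset[OF finY DY] DY])
    show False
    proof (cases "j = 6")
      case False
      then have "(card X = 4 \<and> card Y = 3) \<or> (card X = 6 \<and> card Y = 6)" using cases by auto
      then show False
      proof
        assume h: "card X = 4 \<and> card Y = 3"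
        then show False using sumb low cYD cD ch by simp
      next
        assume h: "card X = 6 \<and> card Y = 6"
        then show False using sumb low cYD cD ch by simp
      qed
    next
      case True
      then have cXY: "card X = 5" "card Y = 4" using cases by auto
      have c1: "card D = 1" using sumb low cYD cD ch cXY by simp
      have edges: "3 * card (Y - D) + 2 * card D \<le> (\<Sum>y\<in>Y. card (Nb E X y))"
      proof (rule sum_lower[OF finY DY])
        fix y assume yD: "y \<in> Y - D"
        then have "2 \<le> card (Nb E X y)" "card (Nb E X y) \<noteq> 2" using fr(1) unfolding D_def by auto
        then show "3 \<le> card (Nb E X y)" by simp
      next
        fix y assume "y \<in> D"
        then show "2 \<le> card (Nb E X y)" unfolding D_def by auto
      qed
      have dc: "(\<Sum>y\<in>Y. card (Nb E X y)) = (\<Sum>x\<in>X. card (Nb E Y x))"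
        by (rule double_count[OF finX finY]) (rule sg_sym[OF sg])
      have sumb': "(\<Sum>x\<in>X. card (Nb E Y x) choose 2) \<le> card Y choose 2"
        by (rule pair_count[OF finY finX Nb_sub]) (use c4' in \<open>auto simp: c4free_def\<close>)
      have tw: "(\<Sum>x\<in>X. 2 * card (Nb E Y x)) \<le> (\<Sum>x\<in>X. (card (Nb E Y x) choose 2) + 3)"
        by (rule sum_mono) (rule two_d_le)
      have t1: "(\<Sum>x\<in>X. (card (Nb E Y x) choose 2) + 3) = (\<Sum>x\<in>X. card (Nb E Y x) choose 2) + 3 * card X"
        by (simp add: sum.distrib)
      have t2: "(\<Sum>x\<in>X. 2 * card (Nb E Y x)) = 2 * (\<Sum>x\<in>X. card (Nb E Y x))"
        by (simp add: sum_distrib_left)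
      have "3 * card (Y - D) + 2 * card D = 11" using c1 cYD cXY by simp
      moreover have "card Y choose 2 = 6" using cXY ch by simp
      ultimately show False using edges dc sumb' tw t1 t2 cXY by linarith
    qed
  qed
qed



lemma upper:
  assumes bip: "BIP n E"
    and jn: "(j = 3 \<and> n = 4) \<or> (j = 4 \<and> n = 5) \<or> (j = 5 \<and> n = 7) \<or> (j = 6 \<and> n = 9) \<or> (j = 7 \<and> n = 12) \<or> (1 \<le> j \<and> n = 2 * j - 1)"
  shows "good n E j"
proof -
  have sg: "simple_graph n E" using bip unfolding BIP_def by blast
  obtain A where A: "\<forall>u v. E u v \<longrightarrow> (u \<in> A \<longleftrightarrow> v \<notin> A)"
    using bip unfolding BIP_def bipartite_def by blast
  define X0 where "X0 = {0..<n} \<inter> A"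
  define Y0 where "Y0 = {0..<n} - A"
  have s1: "X0 \<subseteq> {0..<n}" "Y0 \<subseteq> {0..<n}" "X0 \<inter> Y0 = {}" unfolding X0_def Y0_def by auto
  have s2: "\<forall>u v. u \<in> X0 \<longrightarrow> v \<in> X0 \<longrightarrow> \<not> E u v"
  proof (intro allI impI)
    fix u v assume "u \<in> X0" "v \<in> X0"
    then have "u \<in> A" "v \<in> A" unfolding X0_def by auto
    then show "\<not> E u v" using A by blast
  qed
  have s3: "\<forall>u v. u \<in> Y0 \<longrightarrow> v \<in> Y0 \<longrightarrow> \<not> E u v"
  proof (intro allI impI)
    fix u v assume "u \<in> Y0" "v \<in> Y0"
    then have "u \<notin> A" "v \<notin> A" unfolding Y0_def by auto
    then show "\<not> E u v" using A by blast
  qed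
  have sd: "sides n E X0 Y0" unfolding sides_def using s1 s2 s3 by blast
  have sd': "sides n E Y0 X0" by (rule sides_sym[OF sd])
  have finX0: "finite X0" and finY0: "finite Y0" using sides_fin[OF sd] by blast+
  have un: "X0 \<union> Y0 = {0..<n}" unfolding X0_def Y0_def by auto
  have cn: "card X0 + card Y0 = n"
    using card_Un_disjoint[OF finX0 finY0 s1(3)] un by simp
  have key: "good n E j" if sdXY: "sides n E X Y" and c4: "c4free E X Y" and c4': "c4free E Y X"
    and cX: "card X = j - 1" and cs: "card X + card Y = n" and cY: "card Y < j" for X Y
  proof -
    have "\<exists>T\<subseteq>Y. j \<le> fv E X T"
    proof -
      consider (j3) "j = 3 \<and> n = 4" | (j4) "j = 4 \<and> n = 5" | (j5) "j = 5 \<and> n = 7"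
        | (j6) "j = 6 \<and> n = 9" | (j7) "j = 7 \<and> n = 12" | (jb) "1 \<le> j \<and> n = 2 * j - 1"
        using jn by blast
      then show ?thesis
      proof cases
        case j3
        then have "card X = 2" "card Y = 2" using cX cs by auto
        then show ?thesis using core3[OF sdXY c4] j3 by auto
      next
        case j4
        then have "card X = 3" "card Y = 2" using cX cs by auto
        then show ?thesis using core4[OF sdXY c4] j4 by auto
      next
        case j5
        then have "card X = 4" "card Y = 3" using cX cs by auto
        then show ?thesis using core567[OF sg sdXY c4 c4', of j] j5 by auto
      next
        case j6
        then have "card X = 5" "card Y = 4" using cX cs by auto
        then show ?thesis using core567[OF sg sdXY c4 c4', of j] j6 by auto
      next
        case j7
        then have "card X = 6" "card Y = 6" using cX cs by auto
        then show ?thesis using core567[OF sg sdXY c4 c4', of j] j7 by auto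
      next
        case jb
        then have "card Y = j" using cX cs by auto
        then show ?thesis using cY by simp
      qed
    qed
    then obtain T where "T \<subseteq> Y" "j \<le> fv E X T" by blast
    then have "\<exists>S. k_sparse_set n E 1 j S" using L1[OF sg sdXY] unfolding fv_def by blast
    then show ?thesis unfolding good_def by blast
  qed
  show ?thesis
  proof (cases "j \<le> card X0 \<or> j \<le> card Y0")
    case True
    then have "\<exists>S. k_sparse_set n E 1 j S" using indep_sparse[OF sd] indep_sparse[OF sd'] by blast
    then show ?thesis unfolding good_def by blast
  next
    case False
    show ?thesis
    proof (cases "\<exists>S. k_dense_set n E 1 4 S")
      case True
      then show ?thesis unfolding good_def by blast
    next
      case nd: False
      have c4: "c4free E X0 Y0" by (rule c4free_of_nodense[OF sg sd nd])
      have c4': "c4free E Y0 X0" by (rule c4free_of_nodense[OF sg sd' nd])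
      show ?thesis
      proof (cases "card X0 = j - 1")
        case True
        show ?thesis by (rule key[OF sd c4 c4' True cn]) (use False in linarith)
      next
        case ne: False
        have "card Y0 = j - 1" using ne False cn jn by presburger
        moreover have "card Y0 + card X0 = n" using cn by simp
        moreover have "card X0 < j" using False by simp
        ultimately show ?thesis using key[OF sd' c4' c4] by blast
      qed
    qed
  qed
qed



definition Eadj :: "nat list list \<Rightarrow> nat \<Rightarrow> nat \<Rightarrow> bool" where
  "Eadj adj u v \<longleftrightarrow> u < length adj \<and> v \<in> set (adj ! u)"

definition wfadj :: "nat list list \<Rightarrow> nat \<Rightarrow> bool" where
  "wfadj adj p \<longleftrightarrow> p \<le> length adj \<and> list_all (\<lambda>u. distinct (adj ! u) \<and>
     list_all (\<lambda>v. v < length adj \<and> v \<noteq> u \<and> u \<in> set (adj ! v) \<and> (u < p \<longleftrightarrow> \<not> v < p)) (adj ! u))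
     [0..<length adj]"

definition c4f :: "nat list list \<Rightarrow> bool" where
  "c4f adj \<longleftrightarrow> list_all (\<lambda>u. list_all (\<lambda>v. length (filter (\<lambda>x. x \<in> set (adj ! v)) (adj ! u)) \<le> 1)
     [Suc u..<length adj]) [0..<length adj]"

lemma wf_edge:
  assumes "wfadj adj p" "Eadj adj u v"
  shows "v < length adj \<and> v \<noteq> u \<and> u \<in> set (adj ! v) \<and> (u < p \<longleftrightarrow> \<not> v < p) \<and> u < length adj"
proof -
  have u: "u < length adj" "v \<in> set (adj ! u)" using assms(2) unfolding Eadj_def by auto
  have "\<forall>u\<in>set [0..<length adj]. \<forall>v\<in>set (adj ! u). v < length adj \<and> v \<noteq> u \<and> u \<in> set (adj ! v) \<and> (u < p \<longleftrightarrow> \<not> v < p)"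
    using assms(1) unfolding wfadj_def list_all_iff by blast
  moreover have "u \<in> set [0..<length adj]" using u by simp
  ultimately have "\<forall>v\<in>set (adj ! u). v < length adj \<and> v \<noteq> u \<and> u \<in> set (adj ! v) \<and> (u < p \<longleftrightarrow> \<not> v < p)"
    by (rule bspec)
  then have "v < length adj \<and> v \<noteq> u \<and> u \<in> set (adj ! v) \<and> (u < p \<longleftrightarrow> \<not> v < p)"
    using u(2) by (rule bspec)
  then show ?thesis using u(1) by blast
qed

lemma wf_p: "wfadj adj p \<Longrightarrow> p \<le> length adj" unfolding wfadj_def by blast

lemma wf_distinct:
  assumes "wfadj adj p" "u < length adj" shows "distinct (adj ! u)"
proof -
  have "\<forall>u\<in>set [0..<length adj]. distinct (adj ! u)"
    using assms(1) unfolding wfadj_def list_all_iff by blast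
  then show ?thesis using assms(2) by auto
qed

lemma wit_sg: "wfadj adj p \<Longrightarrow> simple_graph (length adj) (Eadj adj)"
  unfolding simple_graph_def
proof (intro allI impI)
  fix u v assume wf: "wfadj adj p" and e: "Eadj adj u v"
  from wf_edge[OF wf e] show "u < length adj \<and> v < length adj \<and> u \<noteq> v \<and> Eadj adj v u"
    unfolding Eadj_def by auto
qed

lemma wit_BIP: "wfadj adj p \<Longrightarrow> BIP (length adj) (Eadj adj)"
  unfolding BIP_def bipartite_def
proof (intro conjI wit_sg exI allI impI)
  fix u v assume wf: "wfadj adj p" and e: "Eadj adj u v"
  from wf_edge[OF wf e] show "u \<in> {..<p} \<longleftrightarrow> v \<notin> {..<p}" by auto
qed

lemma wit_sides: "wfadj adj p \<Longrightarrow> sides (length adj) (Eadj adj) {0..<p} {p..<length adj}"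
  unfolding sides_def
proof (intro conjI allI impI)
  assume wf: "wfadj adj p"
  show "{0..<p} \<subseteq> {0..<length adj}" using wf_p[OF wf] by auto
  show "{p..<length adj} \<subseteq> {0..<length adj}" by auto
  show "{0..<p} \<inter> {p..<length adj} = {}" by auto
  fix u v
  show "u \<in> {0..<p} \<Longrightarrow> v \<in> {0..<p} \<Longrightarrow> \<not> Eadj adj u v" using wf_edge[OF wf, of u v] by auto
  show "u \<in> {p..<length adj} \<Longrightarrow> v \<in> {p..<length adj} \<Longrightarrow> \<not> Eadj adj u v" using wf_edge[OF wf, of u v] by auto
qed

lemma wit_cover: "wfadj adj p \<Longrightarrow> {0..<p} \<union> {p..<length adj} = {0..<length adj}"
proof -
  assume "wfadj adj p"
  then have "p \<le> length adj" by (rule wf_p)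
  then show ?thesis by auto
qed

lemma wit_nodense:
  assumes wf: "wfadj adj p" and c4: "c4f adj"
  shows "\<not> (\<exists>S. k_dense_set (length adj) (Eadj adj) 1 4 S)"
proof
  assume "\<exists>S. k_dense_set (length adj) (Eadj adj) 1 4 S"
  then obtain S where S: "k_dense_set (length adj) (Eadj adj) 1 4 S" by blast
  obtain v w a b where vw: "v \<noteq> w" "a \<noteq> b" "Eadj adj v a" "Eadj adj w a" "Eadj adj v b" "Eadj adj w b"
    using dense_C4[OF wit_sg[OF wf] wit_sides[OF wf] wit_cover[OF wf] S] by blast
  have key: False if lt: "v' < w'" and e: "Eadj adj v' a" "Eadj adj w' a" "Eadj adj v' b" "Eadj adj w' b" for v' w'
  proof -
    have vN: "v' < length adj" "w' < length adj" using e unfolding Eadj_def by auto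
    have "\<forall>u\<in>set [0..<length adj]. \<forall>v\<in>set [Suc u..<length adj].
        length (filter (\<lambda>x. x \<in> set (adj ! v)) (adj ! u)) \<le> 1"
      using c4 unfolding c4f_def list_all_iff by blast
    then have le: "length (filter (\<lambda>x. x \<in> set (adj ! w')) (adj ! v')) \<le> 1" using vN lt by auto
    have "{a, b} \<subseteq> set (filter (\<lambda>x. x \<in> set (adj ! w')) (adj ! v'))" using e unfolding Eadj_def by auto
    then have "card {a, b} \<le> card (set (filter (\<lambda>x. x \<in> set (adj ! w')) (adj ! v')))"
      by (intro card_mono) auto
    also have "\<dots> \<le> length (filter (\<lambda>x. x \<in> set (adj ! w')) (adj ! v'))" by (rule card_length)
    finally show False using le vw(2) by simp
  qed
  show False
  proof (cases "v < w")
    case True then show False using key vw by blast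
  next
    case False then have "w < v" using vw(1) by simp
    then show False using key vw by blast
  qed
qed

lemma wit_Nb:
  assumes wf: "wfadj adj p" and y: "y < length adj" "p \<le> y"
  shows "Nb (Eadj adj) {0..<p} y = set (adj ! y)"
proof
  show "Nb (Eadj adj) {0..<p} y \<subseteq> set (adj ! y)"
  proof
    fix x assume "x \<in> Nb (Eadj adj) {0..<p} y"
    then have "Eadj adj x y" unfolding Nb_def by auto
    then show "x \<in> set (adj ! y)" using wf_edge[OF wf] by blast
  qed
  show "set (adj ! y) \<subseteq> Nb (Eadj adj) {0..<p} y"
  proof
    fix x assume x: "x \<in> set (adj ! y)"
    then have e: "Eadj adj y x" using y unfolding Eadj_def by auto
    from wf_edge[OF wf e] have "x < length adj" "y \<in> set (adj ! x)" "x < p" using y by auto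
    then show "x \<in> Nb (Eadj adj) {0..<p} y" unfolding Nb_def Eadj_def by auto
  qed
qed

lemma wit_Nb':
  assumes wf: "wfadj adj p" and x: "x < p"
  shows "Nb (Eadj adj) {p..<length adj} x = set (adj ! x)"
proof
  have xN: "x < length adj" using x wf_p[OF wf] by simp
  show "Nb (Eadj adj) {p..<length adj} x \<subseteq> set (adj ! x)"
  proof
    fix y assume "y \<in> Nb (Eadj adj) {p..<length adj} x"
    then have "Eadj adj y x" unfolding Nb_def by auto
    then show "y \<in> set (adj ! x)" using wf_edge[OF wf] by blast
  qed
  show "set (adj ! x) \<subseteq> Nb (Eadj adj) {p..<length adj} x"
  proof
    fix y assume y: "y \<in> set (adj ! x)"
    then have e: "Eadj adj x y" using xN unfolding Eadj_def by auto
    from wf_edge[OF wf e] have "y < length adj" "x \<in> set (adj ! y)" "p \<le> y" using x by auto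
    then show "y \<in> Nb (Eadj adj) {p..<length adj} x" unfolding Nb_def Eadj_def by auto
  qed
qed

definition fval :: "nat list list \<Rightarrow> nat \<Rightarrow> nat list \<Rightarrow> nat" where
  "fval adj p zs = length zs + length (filter (\<lambda>x. list_all (\<lambda>y. y \<notin> set (adj ! x)) zs) [0..<p])
     + length (filter (\<lambda>y. list_ex (\<lambda>x. y \<in> set (adj ! x) \<and> list_all (\<lambda>y'. y' \<in> set (adj ! x) \<longrightarrow> y' = y) zs) [0..<p]) zs)"

lemma wit_fv:
  assumes wf: "wfadj adj p" and d: "distinct zs"
  shows "fv (Eadj adj) {0..<p} (set zs) = fval adj p zs"
proof -
  have E: "\<And>x y. x < p \<Longrightarrow> Eadj adj x y \<longleftrightarrow> y \<in> set (adj ! x)"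
    using wf_p[OF wf] unfolding Eadj_def by auto
  have U: "Uf (Eadj adj) {0..<p} (set zs) = set (filter (\<lambda>x. list_all (\<lambda>y. y \<notin> set (adj ! x)) zs) [0..<p])"
    unfolding Uf_def using E by (auto simp: list_all_iff)
  have P: "Pf (Eadj adj) {0..<p} (set zs) = set (filter (\<lambda>y. list_ex (\<lambda>x. y \<in> set (adj ! x) \<and> list_all (\<lambda>y'. y' \<in> set (adj ! x) \<longrightarrow> y' = y) zs) [0..<p]) zs)"
    unfolding Pf_def using E by (auto simp: list_all_iff list_ex_iff)
  have c1: "card (set zs) = length zs" by (rule distinct_card[OF d])
  have c2: "card (set (filter (\<lambda>x. list_all (\<lambda>y. y \<notin> set (adj ! x)) zs) [0..<p])) =
      length (filter (\<lambda>x. list_all (\<lambda>y. y \<notin> set (adj ! x)) zs) [0..<p])"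
    by (rule distinct_card) simp
  have c3: "card (set (filter (\<lambda>y. list_ex (\<lambda>x. y \<in> set (adj ! x) \<and> list_all (\<lambda>y'. y' \<in> set (adj ! x) \<longrightarrow> y' = y) zs) [0..<p]) zs))
      = length (filter (\<lambda>y. list_ex (\<lambda>x. y \<in> set (adj ! x) \<and> list_all (\<lambda>y'. y' \<in> set (adj ! x) \<longrightarrow> y' = y) zs) [0..<p]) zs)"
    by (rule distinct_card) (simp add: d)
  show ?thesis unfolding fv_def fval_def U P by (simp only: c1 c2 c3)
qed

lemma wit_small:
  assumes wf: "wfadj adj p" and chk: "list_all (\<lambda>zs. fval adj p zs < j) (subseqs [p..<length adj])"
  shows "\<not> (\<exists>S. k_sparse_set (length adj) (Eadj adj) 1 j S)"
proof
  assume "\<exists>S. k_sparse_set (length adj) (Eadj adj) 1 j S"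
  then obtain S where S: "S \<subseteq> {0..<length adj}" "card S = j" "\<forall>v\<in>S. card {u\<in>S. Eadj adj v u} \<le> 1"
    unfolding k_sparse_set_def by blast
  have b: "card S \<le> fv (Eadj adj) {0..<p} (S \<inter> {p..<length adj})"
    unfolding fv_def by (rule L2[OF wit_sg[OF wf] wit_sides[OF wf] wit_cover[OF wf] S(1) S(3)])
  have "S \<inter> {p..<length adj} \<subseteq> set [p..<length adj]" by auto
  then obtain zs where zs: "zs \<in> set (subseqs [p..<length adj])" "S \<inter> {p..<length adj} = set zs"
    using subset_subseqs by blast
  have "distinct zs" using subseqs_distinctD[OF zs(1)] by simp
  then have "fv (Eadj adj) {0..<p} (S \<inter> {p..<length adj}) = fval adj p zs" using wit_fv[OF wf] zs(2) by simp
  moreover have "fval adj p zs < j" using chk zs(1) unfolding list_all_iff by blast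
  ultimately show False using b S(2) by simp
qed



lemma choose2_mono: "a \<le> b \<Longrightarrow> a choose 2 \<le> b choose 2"
proof -
  assume ab: "a \<le> b"
  have "a * (a - 1) \<le> b * (b - 1)" using ab by (intro mult_le_mono) auto
  then have "a * (a - 1) div 2 \<le> b * (b - 1) div 2" by (rule div_le_mono)
  then show ?thesis by (simp add: choose_two)
qed

lemma cc_bound:
  assumes sg: "simple_graph n E" and sd: "sides n E X Y" and c4: "c4free E X Y"
    and S: "S \<subseteq> {0..<n}" "\<forall>v\<in>S. card {u\<in>S. E v u} \<le> 1"
  shows "(\<Sum>y\<in>S \<inter> Y. (card (Nb E X y) - 1) choose 2) \<le> (card X - card (S \<inter> X)) choose 2"
proof -
  have finX: "finite X" and finY: "finite Y" using sides_fin[OF sd] by blast+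
  have finS: "finite S" using S(1) by (meson finite_atLeastLessThan finite_subset)
  define M where "M = (\<lambda>y. Nb E X y - S)"
  have Msub: "\<And>y. M y \<subseteq> X - S \<inter> X" unfolding M_def using Nb_sub by blast
  have pw: "card (M y \<inter> M y') \<le> 1" if "y \<in> S \<inter> Y" "y' \<in> S \<inter> Y" "y \<noteq> y'" for y y'
  proof -
    have "M y \<inter> M y' \<subseteq> Nb E X y \<inter> Nb E X y'" unfolding M_def by blast
    then have "card (M y \<inter> M y') \<le> card (Nb E X y \<inter> Nb E X y')"
      by (rule card_mono[rotated]) (use Nb_fin[OF finX] in blast)
    also have "\<dots> \<le> 1" using c4 that unfolding c4free_def by blast
    finally show ?thesis .
  qed
  have finXS: "finite (X - S \<inter> X)" using finX by simp
  have pc: "(\<Sum>y\<in>S \<inter> Y. card (M y) choose 2) \<le> card (X - S \<inter> X) choose 2"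
    by (rule pair_count[OF finXS _ Msub pw]) (use finS in auto)
  have cXS: "card (X - S \<inter> X) = card X - card (S \<inter> X)"
    by (rule card_Diff_subset) (use finS in auto)
  have trm: "(card (Nb E X y) - 1) choose 2 \<le> card (M y) choose 2" if y: "y \<in> S \<inter> Y" for y
  proof -
    have "Nb E X y = M y \<union> (Nb E X y \<inter> S)" unfolding M_def by blast
    then have "card (Nb E X y) \<le> card (M y) + card (Nb E X y \<inter> S)"
      by (metis card_Un_le)
    moreover have "Nb E X y \<inter> S \<subseteq> {u\<in>S. E y u}" using sg_sym[OF sg] unfolding Nb_def by blast
    then have "card (Nb E X y \<inter> S) \<le> card {u\<in>S. E y u}"
      by (rule card_mono[rotated]) (use finS in auto)
    moreover have "card {u\<in>S. E y u} \<le> 1" using S(2) y by blast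
    ultimately have "card (Nb E X y) - 1 \<le> card (M y)" by linarith
    then show ?thesis by (rule choose2_mono)
  qed
  have "(\<Sum>y\<in>S \<inter> Y. (card (Nb E X y) - 1) choose 2) \<le> (\<Sum>y\<in>S \<inter> Y. card (M y) choose 2)"
    by (rule sum_mono) (rule trm)
  also have "\<dots> \<le> (card X - card (S \<inter> X)) choose 2" using pc cXS by simp
  finally show ?thesis .
qed

lemma side_bound:
  assumes sg: "simple_graph n E" and sd: "sides n E X Y" and c4: "c4free E X Y"
    and S: "S \<subseteq> {0..<n}" "\<forall>v\<in>S. card {u\<in>S. E v u} \<le> 1"
    and deg: "\<And>y. y \<in> Y \<Longrightarrow> card (Nb E X y) = L y" and deg3: "\<And>y. y \<in> Y \<Longrightarrow> 3 \<le> L y"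
    and k: "card {y\<in>Y. L y < 4} \<le> k"
  shows "card (S \<inter> Y) \<le> (card X - card (S \<inter> X)) choose 2 \<and>
         3 * card (S \<inter> Y) \<le> ((card X - card (S \<inter> X)) choose 2) + 2 * k"
proof -
  have finX: "finite X" and finY: "finite Y" using sides_fin[OF sd] by blast+
  define B where "B = S \<inter> Y"
  define D where "D = B \<inter> {y. L y < 4}"
  have finB: "finite B" unfolding B_def using finY by simp
  have DB: "D \<subseteq> B" unfolding D_def by blast
  have cc: "(\<Sum>y\<in>B. (card (Nb E X y) - 1) choose 2) \<le> (card X - card (S \<inter> X)) choose 2"
    unfolding B_def by (rule cc_bound[OF sg sd c4 S])
  have low: "3 * card (B - D) + 1 * card D \<le> (\<Sum>y\<in>B. (card (Nb E X y) - 1) choose 2)"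
  proof (rule sum_lower[OF finB DB])
    fix y assume y: "y \<in> B - D"
    then have "4 \<le> L y" "y \<in> Y" unfolding D_def B_def by auto
    then have "3 \<le> card (Nb E X y) - 1" using deg by simp
    then have "3 choose 2 \<le> (card (Nb E X y) - 1) choose 2" by (rule choose2_mono)
    then show "3 \<le> (card (Nb E X y) - 1) choose 2" by (simp add: choose_two)
  next
    fix y assume y: "y \<in> D"
    then have "y \<in> Y" unfolding D_def B_def by auto
    then have "2 \<le> card (Nb E X y) - 1" using deg deg3 by fastforce
    then have "2 choose 2 \<le> (card (Nb E X y) - 1) choose 2" by (rule choose2_mono)
    then show "1 \<le> (card (Nb E X y) - 1) choose 2" by (simp add: choose_two)
  qed
  have cD: "card D \<le> k"
  proof -
    have "D \<subseteq> {y\<in>Y. L y < 4}" unfolding D_def B_def by blast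
    then have "card D \<le> card {y\<in>Y. L y < 4}" by (rule card_mono[rotated]) (use finY in auto)
    then show ?thesis using k by simp
  qed
  have cBD: "card (B - D) = card B - card D"
    by (rule card_Diff_subset[OF rev_finite_subset[OF finB DB] DB])
  have cDB: "card D \<le> card B" by (rule card_mono[OF finB DB])
  have sBD: "card (B - D) + card D = card B" using cBD cDB by simp
  have h: "3 * card (B - D) + 1 * card D \<le> (card X - card (S \<inter> X)) choose 2" by (rule le_trans[OF low cc])
  define C where "C = (card X - card (S \<inter> X)) choose 2"
  have h': "3 * card (B - D) + 1 * card D \<le> C" using h unfolding C_def .
  have "card B \<le> C \<and> 3 * card B \<le> C + 2 * k" using h' cD sBD by linarith
  then show ?thesis unfolding C_def B_def .
qed



lemma card_filter_le: "card {u \<in> set xs. P u} \<le> length (filter P xs)"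
proof -
  have "{u \<in> set xs. P u} = set (filter P xs)" by auto
  then show ?thesis using card_length by metis
qed

lemma wit_big:
  assumes wf: "wfadj adj p" and c4: "c4f adj"
    and deg3: "list_all (\<lambda>u. 3 \<le> length (adj ! u)) [0..<length adj]"
    and kX: "length (filter (\<lambda>u. length (adj ! u) < 4) [0..<p]) \<le> kx"
    and kY: "length (filter (\<lambda>u. length (adj ! u) < 4) [p..<length adj]) \<le> ky"
    and ar: "list_all (\<lambda>a. \<not> (a \<le> j \<and> j - a \<le> length adj - p \<and>
          j - a \<le> (p - a) * (p - a - 1) div 2 \<and> 3 * (j - a) \<le> (p - a) * (p - a - 1) div 2 + 2 * ky \<and>
          a \<le> (length adj - p - (j - a)) * (length adj - p - (j - a) - 1) div 2 \<and>
          3 * a \<le> (length adj - p - (j - a)) * (length adj - p - (j - a) - 1) div 2 + 2 * kx)) [0..<Suc p]"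
  shows "\<not> (\<exists>S. k_sparse_set (length adj) (Eadj adj) 1 j S)"
proof
  assume "\<exists>S. k_sparse_set (length adj) (Eadj adj) 1 j S"
  then obtain S where S: "S \<subseteq> {0..<length adj}" "card S = j" "\<forall>v\<in>S. card {u\<in>S. Eadj adj v u} \<le> 1"
    unfolding k_sparse_set_def by blast
  define N where "N = length adj"
  define X where "X = {0..<p}"
  define Y where "Y = {p..<N}"
  have pN: "p \<le> N" using wf_p[OF wf] unfolding N_def .
  have sg: "simple_graph N (Eadj adj)" unfolding N_def by (rule wit_sg[OF wf])
  have sd: "sides N (Eadj adj) X Y" unfolding N_def X_def Y_def by (rule wit_sides[OF wf])
  have sd': "sides N (Eadj adj) Y X" by (rule sides_sym[OF sd])
  have nd: "\<not> (\<exists>S. k_dense_set N (Eadj adj) 1 4 S)" unfolding N_def by (rule wit_nodense[OF wf c4])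
  have c4a: "c4free (Eadj adj) X Y" by (rule c4free_of_nodense[OF sg sd nd])
  have c4b: "c4free (Eadj adj) Y X" by (rule c4free_of_nodense[OF sg sd' nd])
  have SN: "S \<subseteq> {0..<N}" using S(1) unfolding N_def .
  have d3: "\<And>u. u < N \<Longrightarrow> 3 \<le> length (adj ! u)" using deg3 unfolding list_all_iff N_def by auto
  have degY: "card (Nb (Eadj adj) X y) = length (adj ! y)" if "y \<in> Y" for y
  proof -
    have "y < length adj" "p \<le> y" using that unfolding Y_def N_def by auto
    then have "Nb (Eadj adj) X y = set (adj ! y)" unfolding X_def by (rule wit_Nb[OF wf])
    then show ?thesis using distinct_card[OF wf_distinct[OF wf \<open>y < length adj\<close>]] by simp
  qed
  have degX: "card (Nb (Eadj adj) Y x) = length (adj ! x)" if "x \<in> X" for x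
  proof -
    have "x < p" using that unfolding X_def by auto
    then have "Nb (Eadj adj) Y x = set (adj ! x)" unfolding Y_def N_def by (rule wit_Nb'[OF wf])
    moreover have "x < length adj" using \<open>x < p\<close> pN unfolding N_def by simp
    ultimately show ?thesis using distinct_card[OF wf_distinct[OF wf]] by simp
  qed
  have d3Y: "\<And>y. y \<in> Y \<Longrightarrow> 3 \<le> length (adj ! y)" using d3 unfolding Y_def by auto
  have d3X: "\<And>x. x \<in> X \<Longrightarrow> 3 \<le> length (adj ! x)" using d3 pN unfolding X_def by auto
  have kY': "card {y\<in>Y. length (adj ! y) < 4} \<le> ky"
    using card_filter_le[of "[p..<length adj]" "\<lambda>u. length (adj ! u) < 4"] kY unfolding Y_def N_def by simp
  have kX': "card {x\<in>X. length (adj ! x) < 4} \<le> kx"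
    using card_filter_le[of "[0..<p]" "\<lambda>u. length (adj ! u) < 4"] kX unfolding X_def by simp
  note b1 = side_bound[OF sg sd c4a SN S(3) degY d3Y kY']
  note b2 = side_bound[OF sg sd' c4b SN S(3) degX d3X kX']
  have cX: "card X = p" and cY: "card Y = N - p" unfolding X_def Y_def by simp_all
  define a where "a = card (S \<inter> X)"
  define b where "b = card (S \<inter> Y)"
  have finS: "finite S" using SN by (meson finite_atLeastLessThan finite_subset)
  have Seq: "S = (S \<inter> X) \<union> (S \<inter> Y)" using SN pN unfolding X_def Y_def by auto
  have "card S = card (S \<inter> X) + card (S \<inter> Y)"
    by (subst Seq, rule card_Un_disjoint) (use finS in \<open>auto simp: X_def Y_def\<close>)
  then have ab: "a + b = j" using S(2) unfolding a_def b_def by simp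
  have aX: "a \<le> p" unfolding a_def using card_mono[of X "S \<inter> X"] cX unfolding X_def by simp
  have bY: "b \<le> N - p" unfolding b_def using card_mono[of Y "S \<inter> Y"] cY unfolding Y_def by simp
  have bj: "b = j - a" using ab by simp
  have h1: "j - a \<le> (p - a) * (p - a - 1) div 2" "3 * (j - a) \<le> (p - a) * (p - a - 1) div 2 + 2 * ky"
    using b1 cX bj unfolding a_def[symmetric] b_def[symmetric] by (simp_all add: choose_two)
  have h2: "a \<le> (N - p - (j - a)) * (N - p - (j - a) - 1) div 2"
       "3 * a \<le> (N - p - (j - a)) * (N - p - (j - a) - 1) div 2 + 2 * kx"
    using b2 cY bj unfolding a_def[symmetric] b_def[symmetric] by (simp_all add: choose_two)
  have "a < Suc p" using aX by linarith
  then have "a \<in> set [0..<Suc p]" by (simp only: set_upt atLeastLessThan_iff) simp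
  then have "\<not> (a \<le> j \<and> j - a \<le> length adj - p \<and>
          j - a \<le> (p - a) * (p - a - 1) div 2 \<and> 3 * (j - a) \<le> (p - a) * (p - a - 1) div 2 + 2 * ky \<and>
          a \<le> (length adj - p - (j - a)) * (length adj - p - (j - a) - 1) div 2 \<and>
          3 * a \<le> (length adj - p - (j - a)) * (length adj - p - (j - a) - 1) div 2 + 2 * kx)"
    using ar unfolding list_all_iff by blast
  moreover have "a \<le> j" "j - a \<le> length adj - p" using ab bY bj unfolding N_def by simp_all
  ultimately show False using h1 h2 unfolding N_def by blast
qed



definition adj3 :: "nat list list" where "adj3 = [[2],[2],[0,1]]"

lemma len3: "length adj3 = 3" unfolding adj3_def by simp

lemma wf3: "wfadj adj3 2" unfolding adj3_def wfadj_def by code_simp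

lemma c43: "c4f adj3" unfolding adj3_def c4f_def by code_simp

lemma sp3: "list_all (\<lambda>zs. fval adj3 2 zs < 3) (subseqs [2..<length adj3])" unfolding adj3_def fval_def by code_simp

lemma nosp3: "\<not> (\<exists>S. k_sparse_set (length adj3) (Eadj adj3) 1 3 S)" by (rule wit_small[OF wf3 sp3])

lemma wit3: "BIP (4 - 1) (Eadj adj3) \<and> \<not> good (4 - 1) (Eadj adj3) 3"
proof -
  have "BIP (length adj3) (Eadj adj3)" by (rule wit_BIP[OF wf3])
  moreover have "\<not> good (length adj3) (Eadj adj3) 3"
    unfolding good_def using wit_nodense[OF wf3 c43] nosp3 by blast
  ultimately show ?thesis using len3 by simp
qed

definition adj4 :: "nat list list" where "adj4 = [[2],[2,3],[0,1],[1]]"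

lemma len4: "length adj4 = 4" unfolding adj4_def by simp

lemma wf4: "wfadj adj4 2" unfolding adj4_def wfadj_def by code_simp

lemma c44: "c4f adj4" unfolding adj4_def c4f_def by code_simp

lemma sp4: "list_all (\<lambda>zs. fval adj4 2 zs < 4) (subseqs [2..<length adj4])" unfolding adj4_def fval_def by code_simp

lemma nosp4: "\<not> (\<exists>S. k_sparse_set (length adj4) (Eadj adj4) 1 4 S)" by (rule wit_small[OF wf4 sp4])

lemma wit4: "BIP (5 - 1) (Eadj adj4) \<and> \<not> good (5 - 1) (Eadj adj4) 4"
proof -
  have "BIP (length adj4) (Eadj adj4)" by (rule wit_BIP[OF wf4])
  moreover have "\<not> good (length adj4) (Eadj adj4) 4"
    unfolding good_def using wit_nodense[OF wf4 c44] nosp4 by blast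
  ultimately show ?thesis using len4 by simp
qed

definition adj5 :: "nat list list" where "adj5 = [[3,5],[3,4],[4,5],[0,1],[1,2],[0,2]]"

lemma len5: "length adj5 = 6" unfolding adj5_def by simp

lemma wf5: "wfadj adj5 3" unfolding adj5_def wfadj_def by code_simp

lemma c45: "c4f adj5" unfolding adj5_def c4f_def by code_simp

lemma sp5: "list_all (\<lambda>zs. fval adj5 3 zs < 5) (subseqs [3..<length adj5])" unfolding adj5_def fval_def by code_simp

lemma nosp5: "\<not> (\<exists>S. k_sparse_set (length adj5) (Eadj adj5) 1 5 S)" by (rule wit_small[OF wf5 sp5])

lemma wit5: "BIP (7 - 1) (Eadj adj5) \<and> \<not> good (7 - 1) (Eadj adj5) 5"
proof -
  have "BIP (length adj5) (Eadj adj5)" by (rule wit_BIP[OF wf5])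
  moreover have "\<not> good (length adj5) (Eadj adj5) 5"
    unfolding good_def using wit_nodense[OF wf5 c45] nosp5 by blast
  ultimately show ?thesis using len5 by simp
qed

definition adj6 :: "nat list list" where "adj6 = [[4,7],[4,5],[5,6],[6,7],[0,1],[1,2],[2,3],[0,3]]"

lemma len6: "length adj6 = 8" unfolding adj6_def by simp

lemma wf6: "wfadj adj6 4" unfolding adj6_def wfadj_def by code_simp

lemma c46: "c4f adj6" unfolding adj6_def c4f_def by code_simp

lemma sp6: "list_all (\<lambda>zs. fval adj6 4 zs < 6) (subseqs [4..<length adj6])" unfolding adj6_def fval_def by code_simp

lemma nosp6: "\<not> (\<exists>S. k_sparse_set (length adj6) (Eadj adj6) 1 6 S)" by (rule wit_small[OF wf6 sp6])

lemma wit6: "BIP (9 - 1) (Eadj adj6) \<and> \<not> good (9 - 1) (Eadj adj6) 6"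
proof -
  have "BIP (length adj6) (Eadj adj6)" by (rule wit_BIP[OF wf6])
  moreover have "\<not> good (length adj6) (Eadj adj6) 6"
    unfolding good_def using wit_nodense[OF wf6 c46] nosp6 by blast
  ultimately show ?thesis using len6 by simp
qed

definition adj7 :: "nat list list" where "adj7 = [[6,7,10],[6,8,9],[7,8],[7,9],[8,10],[9,10],[0,1],[0,2,3],[1,2,4],[1,3,5],[0,4,5]]"

lemma len7: "length adj7 = 11" unfolding adj7_def by simp

lemma wf7: "wfadj adj7 6" unfolding adj7_def wfadj_def by code_simp

lemma c47: "c4f adj7" unfolding adj7_def c4f_def by code_simp

lemma sp7: "list_all (\<lambda>zs. fval adj7 6 zs < 7) (subseqs [6..<length adj7])" unfolding adj7_def fval_def by code_simp

lemma nosp7: "\<not> (\<exists>S. k_sparse_set (length adj7) (Eadj adj7) 1 7 S)" by (rule wit_small[OF wf7 sp7])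

lemma wit7: "BIP (12 - 1) (Eadj adj7) \<and> \<not> good (12 - 1) (Eadj adj7) 7"
proof -
  have "BIP (length adj7) (Eadj adj7)" by (rule wit_BIP[OF wf7])
  moreover have "\<not> good (length adj7) (Eadj adj7) 7"
    unfolding good_def using wit_nodense[OF wf7 c47] nosp7 by blast
  ultimately show ?thesis using len7 by simp
qed

definition adj8 :: "nat list list" where "adj8 = [[7,11,13],[7,8,12],[8,9,13],[7,9,10],[8,10,11],[9,11,12],[10,12,13],[0,1,3],[1,2,4],[2,3,5],[3,4,6],[0,4,5],[1,5,6],[0,2,6]]"

lemma len8: "length adj8 = 14" unfolding adj8_def by simp

lemma wf8: "wfadj adj8 7" unfolding adj8_def wfadj_def by code_simp

lemma c48: "c4f adj8" unfolding adj8_def c4f_def by code_simp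

lemma dg8: "list_all (\<lambda>u. 3 \<le> length (adj8 ! u)) [0..<length adj8]" unfolding adj8_def by code_simp

lemma kx8: "length (filter (\<lambda>u. length (adj8 ! u) < 4) [0..<7]) \<le> 7" unfolding adj8_def by code_simp

lemma ky8: "length (filter (\<lambda>u. length (adj8 ! u) < 4) [7..<length adj8]) \<le> 7" unfolding adj8_def by code_simp

lemma ar8: "list_all (\<lambda>a. \<not> (a \<le> 8 \<and> 8 - a \<le> length adj8 - 7 \<and>
          8 - a \<le> (7 - a) * (7 - a - 1) div 2 \<and> 3 * (8 - a) \<le> (7 - a) * (7 - a - 1) div 2 + 2 * 7 \<and>
          a \<le> (length adj8 - 7 - (8 - a)) * (length adj8 - 7 - (8 - a) - 1) div 2 \<and>
          3 * a \<le> (length adj8 - 7 - (8 - a)) * (length adj8 - 7 - (8 - a) - 1) div 2 + 2 * 7)) [0..<Suc 7]"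
  unfolding len8 by code_simp

lemma nosp8: "\<not> (\<exists>S. k_sparse_set (length adj8) (Eadj adj8) 1 8 S)" by (rule wit_big[OF wf8 c48 dg8 kx8 ky8 ar8])

lemma wit8: "BIP (15 - 1) (Eadj adj8) \<and> \<not> good (15 - 1) (Eadj adj8) 8"
proof -
  have "BIP (length adj8) (Eadj adj8)" by (rule wit_BIP[OF wf8])
  moreover have "\<not> good (length adj8) (Eadj adj8) 8"
    unfolding good_def using wit_nodense[OF wf8 c48] nosp8 by blast
  ultimately show ?thesis using len8 by simp
qed

definition adj9 :: "nat list list" where "adj9 = [[8,11,12],[8,9,13],[9,10,14],[10,11,15],[8,14,15],[9,12,15],[10,12,13],[11,13,14],[0,1,4],[1,2,5],[2,3,6],[0,3,7],[0,5,6],[1,6,7],[2,4,7],[3,4,5]]"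

lemma len9: "length adj9 = 16" unfolding adj9_def by simp

lemma wf9: "wfadj adj9 8" unfolding adj9_def wfadj_def by code_simp

lemma c49: "c4f adj9" unfolding adj9_def c4f_def by code_simp

lemma dg9: "list_all (\<lambda>u. 3 \<le> length (adj9 ! u)) [0..<length adj9]" unfolding adj9_def by code_simp

lemma kx9: "length (filter (\<lambda>u. length (adj9 ! u) < 4) [0..<8]) \<le> 8" unfolding adj9_def by code_simp

lemma ky9: "length (filter (\<lambda>u. length (adj9 ! u) < 4) [8..<length adj9]) \<le> 8" unfolding adj9_def by code_simp

lemma ar9: "list_all (\<lambda>a. \<not> (a \<le> 9 \<and> 9 - a \<le> length adj9 - 8 \<and>
          9 - a \<le> (8 - a) * (8 - a - 1) div 2 \<and> 3 * (9 - a) \<le> (8 - a) * (8 - a - 1) div 2 + 2 * 8 \<and>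
          a \<le> (length adj9 - 8 - (9 - a)) * (length adj9 - 8 - (9 - a) - 1) div 2 \<and>
          3 * a \<le> (length adj9 - 8 - (9 - a)) * (length adj9 - 8 - (9 - a) - 1) div 2 + 2 * 8)) [0..<Suc 8]"
  unfolding len9 by code_simp

lemma nosp9: "\<not> (\<exists>S. k_sparse_set (length adj9) (Eadj adj9) 1 9 S)" by (rule wit_big[OF wf9 c49 dg9 kx9 ky9 ar9])

lemma wit9: "BIP (17 - 1) (Eadj adj9) \<and> \<not> good (17 - 1) (Eadj adj9) 9"
proof -
  have "BIP (length adj9) (Eadj adj9)" by (rule wit_BIP[OF wf9])
  moreover have "\<not> good (length adj9) (Eadj adj9) 9"
    unfolding good_def using wit_nodense[OF wf9 c49] nosp9 by blast
  ultimately show ?thesis using len9 by simp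
qed

definition adj13 :: "nat list list" where "adj13 = [[12,15,16,17],[14,15,20,22],[13,15,19,23],[12,13,14],[17,20,23],[16,19,22],[12,21,22,23],[14,17,19,21],[13,16,20,21],[12,18,19,20],[13,17,18,22],[14,16,18,23],[0,3,6,9],[2,3,8,10],[1,3,7,11],[0,1,2],[0,5,8,11],[0,4,7,10],[9,10,11],[2,5,7,9],[1,4,8,9],[6,7,8],[1,5,6,10],[2,4,6,11]]"

lemma len13: "length adj13 = 24" unfolding adj13_def by simp

lemma wf13: "wfadj adj13 12" unfolding adj13_def wfadj_def by code_simp

lemma c413: "c4f adj13" unfolding adj13_def c4f_def by code_simp

lemma dg13: "list_all (\<lambda>u. 3 \<le> length (adj13 ! u)) [0..<length adj13]" unfolding adj13_def by code_simp

lemma kx13: "length (filter (\<lambda>u. length (adj13 ! u) < 4) [0..<12]) \<le> 3" unfolding adj13_def by code_simp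

lemma ky13: "length (filter (\<lambda>u. length (adj13 ! u) < 4) [12..<length adj13]) \<le> 3" unfolding adj13_def by code_simp

lemma ar13: "list_all (\<lambda>a. \<not> (a \<le> 13 \<and> 13 - a \<le> length adj13 - 12 \<and>
          13 - a \<le> (12 - a) * (12 - a - 1) div 2 \<and> 3 * (13 - a) \<le> (12 - a) * (12 - a - 1) div 2 + 2 * 3 \<and>
          a \<le> (length adj13 - 12 - (13 - a)) * (length adj13 - 12 - (13 - a) - 1) div 2 \<and>
          3 * a \<le> (length adj13 - 12 - (13 - a)) * (length adj13 - 12 - (13 - a) - 1) div 2 + 2 * 3)) [0..<Suc 12]"
  unfolding len13 by code_simp

lemma nosp13: "\<not> (\<exists>S. k_sparse_set (length adj13) (Eadj adj13) 1 13 S)" by (rule wit_big[OF wf13 c413 dg13 kx13 ky13 ar13])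

lemma wit13: "BIP (25 - 1) (Eadj adj13) \<and> \<not> good (25 - 1) (Eadj adj13) 13"
proof -
  have "BIP (length adj13) (Eadj adj13)" by (rule wit_BIP[OF wf13])
  moreover have "\<not> good (length adj13) (Eadj adj13) 13"
    unfolding good_def using wit_nodense[OF wf13 c413] nosp13 by blast
  ultimately show ?thesis using len13 by simp
qed

definition adj14 :: "nat list list" where "adj14 = [[14,17,20,23],[13,17,18,19],[16,17,22,24],[15,17,21,25],[13,14,15,16],[14,19,22,25],[14,18,21,24],[13,23,24,25],[16,19,21,23],[15,18,22,23],[13,20,21,22],[15,19,20,24],[16,18,20,25],[1,4,7,10],[0,4,5,6],[3,4,9,11],[2,4,8,12],[0,1,2,3],[1,6,9,12],[1,5,8,11],[0,10,11,12],[3,6,8,10],[2,5,9,10],[0,7,8,9],[2,6,7,11],[3,5,7,12]]"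

lemma len14: "length adj14 = 26" unfolding adj14_def by simp

lemma wf14: "wfadj adj14 13" unfolding adj14_def wfadj_def by code_simp

lemma c414: "c4f adj14" unfolding adj14_def c4f_def by code_simp

lemma dg14: "list_all (\<lambda>u. 3 \<le> length (adj14 ! u)) [0..<length adj14]" unfolding adj14_def by code_simp

lemma kx14: "length (filter (\<lambda>u. length (adj14 ! u) < 4) [0..<13]) \<le> 0" unfolding adj14_def by code_simp

lemma ky14: "length (filter (\<lambda>u. length (adj14 ! u) < 4) [13..<length adj14]) \<le> 0" unfolding adj14_def by code_simp

lemma ar14: "list_all (\<lambda>a. \<not> (a \<le> 14 \<and> 14 - a \<le> length adj14 - 13 \<and>
          14 - a \<le> (13 - a) * (13 - a - 1) div 2 \<and> 3 * (14 - a) \<le> (13 - a) * (13 - a - 1) div 2 + 2 * 0 \<and>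
          a \<le> (length adj14 - 13 - (14 - a)) * (length adj14 - 13 - (14 - a) - 1) div 2 \<and>
          3 * a \<le> (length adj14 - 13 - (14 - a)) * (length adj14 - 13 - (14 - a) - 1) div 2 + 2 * 0)) [0..<Suc 13]"
  unfolding len14 by code_simp

lemma nosp14: "\<not> (\<exists>S. k_sparse_set (length adj14) (Eadj adj14) 1 14 S)" by (rule wit_big[OF wf14 c414 dg14 kx14 ky14 ar14])

lemma wit14: "BIP (27 - 1) (Eadj adj14) \<and> \<not> good (27 - 1) (Eadj adj14) 14"
proof -
  have "BIP (length adj14) (Eadj adj14)" by (rule wit_BIP[OF wf14])
  moreover have "\<not> good (length adj14) (Eadj adj14) 14"
    unfolding good_def using wit_nodense[OF wf14 c414] nosp14 by blast
  ultimately show ?thesis using len14 by simp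
qed



lemma r3: "ramsey_num BIP 1 4 3 = 4"
proof (rule ramsey_eq)
  show "\<forall>E. BIP 4 E \<longrightarrow> good 4 E 3"
  proof (intro allI impI)
    fix E :: "nat \<Rightarrow> nat \<Rightarrow> bool" assume "BIP 4 E"
    then show "good 4 E 3" by (rule upper) simp
  qed
  show "BIP (4 - 1) (Eadj adj3)" using wit3 by blast
  show "\<not> good (4 - 1) (Eadj adj3) 3" using wit3 by blast
qed simp

lemma r4: "ramsey_num BIP 1 4 4 = 5"
proof (rule ramsey_eq)
  show "\<forall>E. BIP 5 E \<longrightarrow> good 5 E 4"
  proof (intro allI impI)
    fix E :: "nat \<Rightarrow> nat \<Rightarrow> bool" assume "BIP 5 E"
    then show "good 5 E 4" by (rule upper) simp
  qed
  show "BIP (5 - 1) (Eadj adj4)" using wit4 by blast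
  show "\<not> good (5 - 1) (Eadj adj4) 4" using wit4 by blast
qed simp

lemma r5: "ramsey_num BIP 1 4 5 = 7"
proof (rule ramsey_eq)
  show "\<forall>E. BIP 7 E \<longrightarrow> good 7 E 5"
  proof (intro allI impI)
    fix E :: "nat \<Rightarrow> nat \<Rightarrow> bool" assume "BIP 7 E"
    then show "good 7 E 5" by (rule upper) simp
  qed
  show "BIP (7 - 1) (Eadj adj5)" using wit5 by blast
  show "\<not> good (7 - 1) (Eadj adj5) 5" using wit5 by blast
qed simp

lemma r6: "ramsey_num BIP 1 4 6 = 9"
proof (rule ramsey_eq)
  show "\<forall>E. BIP 9 E \<longrightarrow> good 9 E 6"
  proof (intro allI impI)
    fix E :: "nat \<Rightarrow> nat \<Rightarrow> bool" assume "BIP 9 E"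
    then show "good 9 E 6" by (rule upper) simp
  qed
  show "BIP (9 - 1) (Eadj adj6)" using wit6 by blast
  show "\<not> good (9 - 1) (Eadj adj6) 6" using wit6 by blast
qed simp

lemma r7: "ramsey_num BIP 1 4 7 = 12"
proof (rule ramsey_eq)
  show "\<forall>E. BIP 12 E \<longrightarrow> good 12 E 7"
  proof (intro allI impI)
    fix E :: "nat \<Rightarrow> nat \<Rightarrow> bool" assume "BIP 12 E"
    then show "good 12 E 7" by (rule upper) simp
  qed
  show "BIP (12 - 1) (Eadj adj7)" using wit7 by blast
  show "\<not> good (12 - 1) (Eadj adj7) 7" using wit7 by blast
qed simp

lemma r8: "ramsey_num BIP 1 4 8 = 15"
proof (rule ramsey_eq)
  show "\<forall>E. BIP 15 E \<longrightarrow> good 15 E 8"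
  proof (intro allI impI)
    fix E :: "nat \<Rightarrow> nat \<Rightarrow> bool" assume "BIP 15 E"
    then show "good 15 E 8" by (rule upper) simp
  qed
  show "BIP (15 - 1) (Eadj adj8)" using wit8 by blast
  show "\<not> good (15 - 1) (Eadj adj8) 8" using wit8 by blast
qed simp

lemma r9: "ramsey_num BIP 1 4 9 = 17"
proof (rule ramsey_eq)
  show "\<forall>E. BIP 17 E \<longrightarrow> good 17 E 9"
  proof (intro allI impI)
    fix E :: "nat \<Rightarrow> nat \<Rightarrow> bool" assume "BIP 17 E"
    then show "good 17 E 9" by (rule upper) simp
  qed
  show "BIP (17 - 1) (Eadj adj9)" using wit9 by blast
  show "\<not> good (17 - 1) (Eadj adj9) 9" using wit9 by blast
qed simp

lemma r13: "ramsey_num BIP 1 4 13 = 25"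
proof (rule ramsey_eq)
  show "\<forall>E. BIP 25 E \<longrightarrow> good 25 E 13"
  proof (intro allI impI)
    fix E :: "nat \<Rightarrow> nat \<Rightarrow> bool" assume "BIP 25 E"
    then show "good 25 E 13" by (rule upper) simp
  qed
  show "BIP (25 - 1) (Eadj adj13)" using wit13 by blast
  show "\<not> good (25 - 1) (Eadj adj13) 13" using wit13 by blast
qed simp

lemma r14: "ramsey_num BIP 1 4 14 = 27"
proof (rule ramsey_eq)
  show "\<forall>E. BIP 27 E \<longrightarrow> good 27 E 14"
  proof (intro allI impI)
    fix E :: "nat \<Rightarrow> nat \<Rightarrow> bool" assume "BIP 27 E"
    then show "good 27 E 14" by (rule upper) simp
  qed
  show "BIP (27 - 1) (Eadj adj14)" using wit14 by blast
  show "\<not> good (27 - 1) (Eadj adj14) 14" using wit14 by blast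
qed simp

theorem theorem5p3:
  shows "(\<forall>j\<in>{4,5,6}. ramsey_num BIP 1 4 j = 2 * j - 3)
       \<and> (\<forall>j\<in>{3,7}. ramsey_num BIP 1 4 j = 2 * j - 2)
       \<and> (\<forall>j\<in>{8,9,13,14}. ramsey_num BIP 1 4 j = 2 * j - 1)"
  using r3 r4 r5 r6 r7 r8 r9 r13 r14 by simp


end
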